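(* Suppose $K^0\in\mathbb{K}$. For any step size $$0<\eta\le\frac12\Big(\|R\|_{\max}+\frac{\|B\|_{\max}^2C(K^0)}{\mu}\Big)^{-1},$$ the iterates of the natural policy gradient method $K^{n+1}=K^n-\eta\nabla C(K^n)(\mathbf{X}^{K^n})^{-1}=K^n-2\eta L^{K^n}$ all lie in $\mathbb{K}$ and satisfy, for all $n\ge0$, $$C(K^n)-C(K^* )\le\Big(1-\frac{2\mu\Lambda_{\min}(R)}{\|\mathbf{X}^{K^*}\|_{\max}}\eta\Big)^n\big(C(K^0)-C(K^* )\big).$$
   Context: Let $N_s\ge 1$, $\Omega=\{1,\dots,N_s\}$; tuples $V=(V_1,\dots,V_{N_s})$ of matrices are combined componentwise, $\|V\|_{\max}=\max_i\|V_i\|$ (spectral norm), $\Lambda_{\min}(V)=\min_i\sigma_{\min}(V_i)$. Markovian jump linear system: $x_{t+1}=A_{\omega(t)}x_t+B_{\omega(t)}u_t$, $A_i\in\mathbb{R}^{d\times d}$, $B_i\in\mathbb{R}^{d\times k}$, $B=(B_i)$; $\{\omega(t)\}$ is a time-homogeneous Markov chain on $\Omega$ with transition probabilities $p_{ij}$ and initial distribution $\pi$ with $\pi_i>0$; $x_0$ is random, independent of the chain, with $\mathbb{E}[x_0x_0^T]\succ0$. The system is mean-square stabilizable. $Q=(Q_i)\succ0$, $R=(R_i)\succ0$. For $K=(K_i)$, $K_i\in\mathbb{R}^{k\times d}$, $u_t=-K_{\omega(t)}x_t$ and $C(K)=\mathbb{E}[\sum_{t\ge0}x_t^TQ_{\omega(t)}x_t+u_t^TR_{\omega(t)}u_t]$.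 $\mathbb{K}$ is the set of $K$ making the closed loop $x_{t+1}=\Gamma_{\omega(t)}x_t$, $\Gamma_i=A_i-B_iK_i$, mean-square stable (equivalently $C(K)<\infty$); $\nabla C(K)$ is the gradient of $C$ on $\mathbb{K}$ w.r.t. $\langle V,S\rangle=\sum_i\mathrm{tr}(V_i^TS_i)$. $K^*$ is the optimal gain minimizing $C$ over $\mathbb{K}$. $\mathcal{E}_i(V)=\sum_jp_{ij}V_j$; $\mathcal{T}_j(V)=\sum_ip_{ij}\Gamma_iV_i\Gamma_i^T$. For $K\in\mathbb{K}$: $P^K$ solves $P_i^K=Q_i+K_i^TR_iK_i+\Gamma_i^T\mathcal{E}_i(P^K)\Gamma_i$; $L_i^K=(R_i+B_i^T\mathcal{E}_i(P^K)B_i)K_i-B_i^T\mathcal{E}_i(P^K)A_i$; $X_i(0)=\mathbb{E}[x_0x_0^T\mathbf{1}\{\omega(0)=i\}]$, $\mathbf{X}^K=\sum_{t\ge0}\mathcal{T}^t(X(0))$. $\mu=\min_i\pi_i\,\sigma_{\min}(\mathbb{E}[x_0x_0^T])$. *)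

theory Defs
  imports "HOL-Analysis.Analysis"
begin

text \<open>Markovian jump linear system with modes given by a finite type 's.
  Matrices are real^'n^'m. Tuples of matrices are functions 's => matrix.\<close>

definition psd_mat :: "real^'n^'n \<Rightarrow> bool" where
  "psd_mat M \<longleftrightarrow> transpose M = M \<and> (\<forall>x. 0 \<le> x \<bullet> (M *v x))"

definition pd_mat :: "real^'n^'n \<Rightarrow> bool" where
  "pd_mat M \<longleftrightarrow> transpose M = M \<and> (\<forall>x. x \<noteq> 0 \<longrightarrow> 0 < x \<bullet> (M *v x))"

definition spec_norm :: "real^'n^'m \<Rightarrow> real" where
  "spec_norm M = onorm (\<lambda>x. M *v x)"

definition sigma_min :: "real^'n^'m \<Rightarrow> real" where
  "sigma_min M = Inf {norm (M *v x) | x. norm x = 1}"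

definition max_norm :: "('s::finite \<Rightarrow> real^'n^'m) \<Rightarrow> real" where
  "max_norm V = Max (range (\<lambda>i. spec_norm (V i)))"

definition Lambda_min :: "('s::finite \<Rightarrow> real^'n^'m) \<Rightarrow> real" where
  "Lambda_min V = Min (range (\<lambda>i. sigma_min (V i)))"

definition Gam :: "('s \<Rightarrow> real^'d^'d) \<Rightarrow> ('s \<Rightarrow> real^'k^'d) \<Rightarrow> ('s \<Rightarrow> real^'d^'k) \<Rightarrow> 's \<Rightarrow> real^'d^'d" where
  "Gam A B K i = A i - B i ** K i"

definition Eop :: "('s::finite \<Rightarrow> 's \<Rightarrow> real) \<Rightarrow> ('s \<Rightarrow> real^'n^'m) \<Rightarrow> 's \<Rightarrow> real^'n^'m" where
  "Eop p V i = (\<Sum>j\<in>UNIV. p i j *\<^sub>R V j)"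

definition Top :: "('s::finite \<Rightarrow> real^'d^'d) \<Rightarrow> ('s \<Rightarrow> real^'k^'d) \<Rightarrow> ('s \<Rightarrow> 's \<Rightarrow> real)
    \<Rightarrow> ('s \<Rightarrow> real^'d^'k) \<Rightarrow> ('s \<Rightarrow> real^'d^'d) \<Rightarrow> 's \<Rightarrow> real^'d^'d" where
  "Top A B p K V j = (\<Sum>i\<in>UNIV. p i j *\<^sub>R (Gam A B K i ** V i ** transpose (Gam A B K i)))"

text \<open>X_i(0) = E[x0 x0^T 1{omega(0)=i}] = pi_i E[x0 x0^T] (x0 independent of the chain)\<close>
definition X0 :: "('s \<Rightarrow> real) \<Rightarrow> real^'d^'d \<Rightarrow> 's \<Rightarrow> real^'d^'d" where
  "X0 \<pi> \<Sigma> i = \<pi> i *\<^sub>R \<Sigma>"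

text \<open>second moments X_i(t) = E[x_t x_t^T 1{omega(t)=i}] of the closed loop\<close>
definition state_cov :: "('s::finite \<Rightarrow> real^'d^'d) \<Rightarrow> ('s \<Rightarrow> real^'k^'d) \<Rightarrow> ('s \<Rightarrow> 's \<Rightarrow> real)
    \<Rightarrow> ('s \<Rightarrow> real) \<Rightarrow> real^'d^'d \<Rightarrow> ('s \<Rightarrow> real^'d^'k) \<Rightarrow> nat \<Rightarrow> 's \<Rightarrow> real^'d^'d" where
  "state_cov A B p \<pi> \<Sigma> K t = (Top A B p K ^^ t) (X0 \<pi> \<Sigma>)"

text \<open>mean-square stability of the closed loop: E[x_t x_t^T 1{omega(t)=i}] -> 0
  for every admissible initial second-moment tuple (psd components)\<close>
definition ms_stable :: "('s::finite \<Rightarrow> real^'d^'d) \<Rightarrow> ('s \<Rightarrow> real^'k^'d) \<Rightarrow> ('s \<Rightarrow> 's \<Rightarrow> real)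
    \<Rightarrow> ('s \<Rightarrow> real^'d^'k) \<Rightarrow> bool" where
  "ms_stable A B p K \<longleftrightarrow>
     (\<forall>V. (\<forall>i. psd_mat (V i)) \<longrightarrow> (\<forall>i. (\<lambda>t. (Top A B p K ^^ t) V i) \<longlonglongrightarrow> 0))"

definition Kset :: "('s::finite \<Rightarrow> real^'d^'d) \<Rightarrow> ('s \<Rightarrow> real^'k^'d) \<Rightarrow> ('s \<Rightarrow> 's \<Rightarrow> real)
    \<Rightarrow> ('s \<Rightarrow> real^'d^'k) set" where
  "Kset A B p = {K. ms_stable A B p K}"

text \<open>cost C(K) = E[sum_t x_t^T Q x_t + u_t^T R u_t] with u_t = -K x_t, written via
  E[x_t^T M_{omega(t)} x_t] = sum_i tr(M_i X_i(t))\<close>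
definition cost :: "('s::finite \<Rightarrow> real^'d^'d) \<Rightarrow> ('s \<Rightarrow> real^'k^'d) \<Rightarrow> ('s \<Rightarrow> 's \<Rightarrow> real)
    \<Rightarrow> ('s \<Rightarrow> real) \<Rightarrow> real^'d^'d \<Rightarrow> ('s \<Rightarrow> real^'d^'d) \<Rightarrow> ('s \<Rightarrow> real^'k^'k)
    \<Rightarrow> ('s \<Rightarrow> real^'d^'k) \<Rightarrow> real" where
  "cost A B p \<pi> \<Sigma> Q R K =
     (\<Sum>t. \<Sum>i\<in>UNIV. trace ((Q i + transpose (K i) ** R i ** K i) ** state_cov A B p \<pi> \<Sigma> K t i))"

definition Pmat :: "('s::finite \<Rightarrow> real^'d^'d) \<Rightarrow> ('s \<Rightarrow> real^'k^'d) \<Rightarrow> ('s \<Rightarrow> 's \<Rightarrow> real)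
    \<Rightarrow> ('s \<Rightarrow> real^'d^'d) \<Rightarrow> ('s \<Rightarrow> real^'k^'k) \<Rightarrow> ('s \<Rightarrow> real^'d^'k) \<Rightarrow> 's \<Rightarrow> real^'d^'d" where
  "Pmat A B p Q R K = (THE P. \<forall>i. P i = Q i + transpose (K i) ** R i ** K i
        + transpose (Gam A B K i) ** Eop p P i ** Gam A B K i)"

definition Lmat :: "('s::finite \<Rightarrow> real^'d^'d) \<Rightarrow> ('s \<Rightarrow> real^'k^'d) \<Rightarrow> ('s \<Rightarrow> 's \<Rightarrow> real)
    \<Rightarrow> ('s \<Rightarrow> real^'d^'d) \<Rightarrow> ('s \<Rightarrow> real^'k^'k) \<Rightarrow> ('s \<Rightarrow> real^'d^'k) \<Rightarrow> 's \<Rightarrow> real^'d^'k" where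
  "Lmat A B p Q R K i =
     (R i + transpose (B i) ** Eop p (Pmat A B p Q R K) i ** B i) ** K i
     - transpose (B i) ** Eop p (Pmat A B p Q R K) i ** A i"

definition Xmat :: "('s::finite \<Rightarrow> real^'d^'d) \<Rightarrow> ('s \<Rightarrow> real^'k^'d) \<Rightarrow> ('s \<Rightarrow> 's \<Rightarrow> real)
    \<Rightarrow> ('s \<Rightarrow> real) \<Rightarrow> real^'d^'d \<Rightarrow> ('s \<Rightarrow> real^'d^'k) \<Rightarrow> 's \<Rightarrow> real^'d^'d" where
  "Xmat A B p \<pi> \<Sigma> K i = (\<Sum>t. state_cov A B p \<pi> \<Sigma> K t i)"

definition mu :: "('s::finite \<Rightarrow> real) \<Rightarrow> real^'d^'d \<Rightarrow> real" where
  "mu \<pi> \<Sigma> = Min (range (\<lambda>i. \<pi> i * sigma_min \<Sigma>))"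

primrec npg_iter :: "('s::finite \<Rightarrow> real^'d^'d) \<Rightarrow> ('s \<Rightarrow> real^'k^'d) \<Rightarrow> ('s \<Rightarrow> 's \<Rightarrow> real)
    \<Rightarrow> ('s \<Rightarrow> real^'d^'d) \<Rightarrow> ('s \<Rightarrow> real^'k^'k) \<Rightarrow> real \<Rightarrow> ('s \<Rightarrow> real^'d^'k)
    \<Rightarrow> nat \<Rightarrow> 's \<Rightarrow> real^'d^'k" where
  "npg_iter A B p Q R \<eta> K0 0 = K0"
| "npg_iter A B p Q R \<eta> K0 (Suc n) =
     (\<lambda>i. npg_iter A B p Q R \<eta> K0 n i - (2 * \<eta>) *\<^sub>R Lmat A B p Q R (npg_iter A B p Q R \<eta> K0 n) i)"

end

theory Submission
  imports Defs
begin


lemma matrix_add_rdistrib: "((A::real^'n^'m) + B) ** C = A ** C + B ** C"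
  by (simp add: matrix_matrix_mult_def vec_eq_iff sum.distrib algebra_simps)

lemma matrix_diff_ldistrib: "(A::real^'n^'m) ** (B - C) = A ** B - A ** C"
  by (simp add: matrix_matrix_mult_def vec_eq_iff sum_subtractf algebra_simps)

lemma matrix_diff_rdistrib: "((A::real^'n^'m) - B) ** C = A ** C - B ** C"
  by (simp add: matrix_matrix_mult_def vec_eq_iff sum_subtractf algebra_simps)

lemma matrix_scaleR_left: "(c *\<^sub>R (A::real^'n^'m)) ** B = c *\<^sub>R (A ** B)"
  by (simp add: matrix_matrix_mult_def vec_eq_iff sum_distrib_left algebra_simps)

lemma matrix_scaleR_right: "(A::real^'n^'m) ** (c *\<^sub>R B) = c *\<^sub>R (A ** B)"
  by (simp add: matrix_matrix_mult_def vec_eq_iff sum_distrib_left algebra_simps)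

lemma matrix_uminus_left: "(- (A::real^'n^'m)) ** B = - (A ** B)"
  by (simp add: matrix_matrix_mult_def vec_eq_iff sum_negf)

lemma matrix_uminus_right: "(A::real^'n^'m) ** (- B) = - (A ** B)"
  by (simp add: matrix_matrix_mult_def vec_eq_iff sum_negf)

lemma matrix_sum_left: "(\<Sum>j\<in>S. f j) ** (C::real^'p^'n) = (\<Sum>j\<in>S. (f j :: real^'n^'m) ** C)"
  by (induction S rule: infinite_finite_induct) (auto simp: matrix_add_rdistrib)

lemma matrix_sum_right: "(C::real^'n^'m) ** (\<Sum>j\<in>S. f j) = (\<Sum>j\<in>S. C ** (f j :: real^'p^'n))"
  by (induction S rule: infinite_finite_induct) (auto simp: matrix_add_ldistrib)

lemma transpose_add: "transpose ((A::real^'n^'m) + B) = transpose A + transpose B"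
  by (simp add: transpose_def vec_eq_iff)

lemma transpose_diff: "transpose ((A::real^'n^'m) - B) = transpose A - transpose B"
  by (simp add: transpose_def vec_eq_iff)

lemma transpose_uminus: "transpose (- (A::real^'n^'m)) = - transpose A"
  by (simp add: transpose_def vec_eq_iff)

lemma transpose_zero: "transpose (0::real^'n^'m) = 0"
  by (simp add: transpose_def vec_eq_iff)

lemma transpose_sum: "transpose (\<Sum>j\<in>S. (f j::real^'n^'m)) = (\<Sum>j\<in>S. transpose (f j))"
  by (induction S rule: infinite_finite_induct) (auto simp: transpose_add transpose_zero)

lemma trace_scaleR: "trace (c *\<^sub>R (A::real^'n^'n)) = c * trace A"
  by (simp add: trace_def sum_distrib_left)

lemma trace_sum: "trace (\<Sum>j\<in>S. (f j::real^'n^'n)) = (\<Sum>j\<in>S. trace (f j))"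
  by (induction S rule: infinite_finite_induct) (auto simp: trace_add trace_0[simplified])

lemma trace_uminus: "trace (- (A::real^'n^'n)) = - trace A"
  by (simp add: trace_def sum_negf)

lemma trace_transpose: "trace (transpose (A::real^'n^'n)) = trace A"
  by (simp add: trace_def transpose_def)

lemma trace_zero: "trace (0::real^'n^'n) = 0"
  by (simp add: trace_def)

lemma matrix_vector_mult_sum_left: "(\<Sum>j\<in>S. (f j::real^'n^'m)) *v x = (\<Sum>j\<in>S. f j *v x)"
  by (induction S rule: infinite_finite_induct) (auto simp: matrix_vector_mult_add_rdistrib)

lemma matrix_vector_mult_scaleR_left: "(c *\<^sub>R (A::real^'n^'m)) *v x = c *\<^sub>R (A *v x)"
  by (simp add: matrix_vector_mult_def vec_eq_iff sum_distrib_left algebra_simps)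

lemma matrix_vector_mult_uminus_left: "(- (A::real^'n^'m)) *v x = - (A *v x)"
  by (simp add: matrix_vector_mult_def vec_eq_iff sum_negf)

lemma dot_transpose: "x \<bullet> ((A::real^'n^'m) *v y) = (transpose A *v x) \<bullet> y"
  by (metis dot_lmul_matrix transpose_matrix_vector transpose_transpose vector_transpose_matrix)

definition qf :: "real^'n^'n \<Rightarrow> real^'n \<Rightarrow> real" where
  "qf M x = x \<bullet> (M *v x)"

definition outer :: "real^'n \<Rightarrow> real^'m \<Rightarrow> real^'m^'n" where
  "outer v w = (\<chi> i j. v$i * w$j)"

lemma outer_mult_vec: "outer v w *v x = (w \<bullet> x) *\<^sub>R v"
  by (simp add: outer_def matrix_vector_mult_def vec_eq_iff inner_vec_def sum_distrib_left algebra_simps)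

lemma transpose_outer: "transpose (outer v w) = outer w v"
  by (simp add: outer_def transpose_def vec_eq_iff)

lemma trace_outer: "trace (M ** outer v v) = qf M v"
  by (simp add: trace_def qf_def outer_def matrix_matrix_mult_def matrix_vector_mult_def
      inner_vec_def sum_distrib_left mult_ac)

lemma trace_outer': "trace (outer v w) = v \<bullet> w"
  by (simp add: trace_def outer_def inner_vec_def)

lemma qf_add: "qf (A + B) x = qf A x + qf B x"
  by (simp add: qf_def matrix_vector_mult_add_rdistrib inner_add_right)

lemma qf_diff: "qf (A - B) x = qf A x - qf B x"
  by (simp add: qf_def matrix_vector_mult_diff_rdistrib inner_diff_right)

lemma qf_scaleR: "qf (c *\<^sub>R A) x = c * qf A x"
  by (simp add: qf_def matrix_vector_mult_scaleR_left)

lemma qf_sum: "qf (\<Sum>j\<in>S. f j) x = (\<Sum>j\<in>S. qf (f j) x)"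
  by (simp add: qf_def matrix_vector_mult_sum_left inner_sum_right)

lemma qf_zero: "qf 0 x = 0"
  by (simp add: qf_def)

lemma mat_mult_vec: "(mat c :: real^'n^'n) *v x = c *\<^sub>R x"
proof -
  have "(mat c :: real^'n^'n) = c *\<^sub>R mat 1" by (simp add: mat_def vec_eq_iff)
  then show ?thesis by (simp add: matrix_vector_mult_scaleR_left)
qed

lemma qf_mat: "qf (mat c) x = c * (norm x)\<^sup>2"
  by (simp add: qf_def mat_mult_vec power2_norm_eq_inner)

lemma qf_outer: "qf (outer v v) x = (v \<bullet> x)\<^sup>2"
  by (simp add: qf_def outer_mult_vec power2_eq_square inner_commute)

lemma qf_congr: "qf (transpose G ** S ** G) x = qf S (G *v x)"
proof -
  have "(transpose G ** S ** G) *v x = transpose G *v (S *v (G *v x))"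
    by (simp add: matrix_vector_mul_assoc matrix_mul_assoc)
  then show ?thesis unfolding qf_def by (simp only: dot_transpose transpose_transpose)
qed

lemma qf_congr': "qf (G ** S ** transpose G) x = qf S (transpose G *v x)"
  using qf_congr[of "transpose G" S x] by simp

lemma symm_inner: "transpose (S::real^'n^'n) = S \<Longrightarrow> x \<bullet> (S *v y) = y \<bullet> (S *v x)"
  by (subst dot_transpose) (simp add: inner_commute)

lemma qf_smult: "qf S (c *\<^sub>R x) = c\<^sup>2 * qf S x"
  by (simp add: qf_def matrix_vector_mult_scaleR power2_eq_square)

lemma psd_add: "psd_mat A \<Longrightarrow> psd_mat B \<Longrightarrow> psd_mat (A + B)"
  by (auto simp: psd_mat_def transpose_add qf_add[unfolded qf_def])

lemma psd_scaleR: "psd_mat A \<Longrightarrow> 0 \<le> c \<Longrightarrow> psd_mat (c *\<^sub>R A)"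
  by (auto simp: psd_mat_def transpose_scalar qf_scaleR[unfolded qf_def])

lemma psd_zero: "psd_mat 0"
  by (simp add: psd_mat_def transpose_zero)

lemma psd_sum: "(\<And>j. j \<in> S \<Longrightarrow> psd_mat (f j)) \<Longrightarrow> psd_mat (\<Sum>j\<in>S. f j)"
  by (induction S rule: infinite_finite_induct) (auto simp: psd_zero psd_add)

lemma psd_congr: "psd_mat S \<Longrightarrow> psd_mat (transpose G ** S ** G)"
  unfolding psd_mat_def
  by (auto simp: matrix_transpose_mul matrix_mul_assoc qf_congr[unfolded qf_def])

lemma psd_congr': "psd_mat S \<Longrightarrow> psd_mat (G ** S ** transpose G)"
  using psd_congr[of S "transpose G"] by simp

lemma psd_outer: "psd_mat (outer v v)"
  by (simp add: psd_mat_def transpose_outer qf_outer[unfolded qf_def])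

lemma psd_mat_1: "psd_mat (mat 1)"
  by (simp add: psd_mat_def qf_mat[unfolded qf_def])

lemma pd_psd: "pd_mat A \<Longrightarrow> psd_mat A"
  unfolding pd_mat_def psd_mat_def by (metis inner_zero_left less_eq_real_def)

lemma psd_qf: "psd_mat A \<Longrightarrow> 0 \<le> qf A x"
  by (simp add: psd_mat_def qf_def)

lemma psd_iff: "psd_mat A \<longleftrightarrow> transpose A = A \<and> (\<forall>x. 0 \<le> qf A x)"
  by (simp add: psd_mat_def qf_def)

lemma psd_ttt: "psd_mat (transpose L ** L)"
  using psd_congr[OF psd_mat_1, of L] by simp


lemma spec_bound: "norm ((M::real^'n^'m) *v x) \<le> spec_norm M * norm x"
  unfolding spec_norm_def using onorm[OF matrix_vector_mul_bounded_linear[of M]] by simp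

lemma spec_norm_le: "(\<And>x. norm ((M::real^'n^'m) *v x) \<le> b * norm x) \<Longrightarrow> spec_norm M \<le> b"
  unfolding spec_norm_def by (rule onorm_le) simp

lemma spec_norm_nonneg: "0 \<le> spec_norm (M::real^'n^'m)"
  unfolding spec_norm_def using onorm_pos_le[OF matrix_vector_mul_bounded_linear[of M]] by simp

lemma spec_norm_mult: "spec_norm ((A::real^'n^'m) ** B) \<le> spec_norm A * spec_norm (B::real^'p^'n)"
proof (rule spec_norm_le)
  fix x
  have "norm ((A ** B) *v x) = norm (A *v (B *v x))" by (simp add: matrix_vector_mul_assoc)
  also have "\<dots> \<le> spec_norm A * norm (B *v x)" by (rule spec_bound)
  also have "\<dots> \<le> spec_norm A * (spec_norm B * norm x)"
    by (intro mult_left_mono spec_bound spec_norm_nonneg)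
  finally show "norm ((A ** B) *v x) \<le> spec_norm A * spec_norm B * norm x" by (simp add: mult.assoc)
qed

lemma spec_norm_add: "spec_norm ((A::real^'n^'m) + B) \<le> spec_norm A + spec_norm B"
proof (rule spec_norm_le)
  fix x
  have "norm ((A + B) *v x) \<le> norm (A *v x) + norm (B *v x)"
    by (simp add: matrix_vector_mult_add_rdistrib norm_triangle_ineq)
  also have "\<dots> \<le> spec_norm A * norm x + spec_norm B * norm x"
    by (intro add_mono spec_bound)
  finally show "norm ((A + B) *v x) \<le> (spec_norm A + spec_norm B) * norm x" by (simp add: algebra_simps)
qed

lemma spec_norm_scaleR: "spec_norm (c *\<^sub>R (A::real^'n^'m)) \<le> \<bar>c\<bar> * spec_norm A"
proof (rule spec_norm_le)
  fix x
  have "norm ((c *\<^sub>R A) *v x) = \<bar>c\<bar> * norm (A *v x)"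
    by (simp add: matrix_vector_mult_scaleR_left)
  also have "\<dots> \<le> \<bar>c\<bar> * (spec_norm A * norm x)"
    by (intro mult_left_mono spec_bound) auto
  finally show "norm ((c *\<^sub>R A) *v x) \<le> \<bar>c\<bar> * spec_norm A * norm x" by (simp add: mult.assoc)
qed

lemma spec_norm_sum: "finite S \<Longrightarrow> spec_norm (\<Sum>j\<in>S. (f j::real^'n^'m)) \<le> (\<Sum>j\<in>S. spec_norm (f j))"
proof (induction S rule: finite_induct)
  case empty
  then show ?case by (simp add: spec_norm_def onorm_zero[unfolded fun_eq_iff] )
next
  case (insert a S)
  then show ?case using spec_norm_add[of "f a" "sum f S"] by simp
qed

lemma spec_norm_transpose: "spec_norm (transpose (B::real^'n^'m)) \<le> spec_norm B"
proof (rule spec_norm_le)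
  fix y
  let ?z = "transpose B *v y"
  have "(norm ?z)\<^sup>2 = ?z \<bullet> ?z" by (simp add: power2_norm_eq_inner)
  also have "\<dots> = y \<bullet> (B *v ?z)" by (simp add: dot_transpose)
  also have "\<dots> \<le> norm y * norm (B *v ?z)" by (rule norm_cauchy_schwarz)
  also have "\<dots> \<le> norm y * (spec_norm B * norm ?z)" by (intro mult_left_mono spec_bound) auto
  finally have *: "(norm ?z)\<^sup>2 \<le> spec_norm B * norm y * norm ?z" by (simp add: ac_simps)
  show "norm ?z \<le> spec_norm B * norm y"
  proof (cases "norm ?z = 0")
    case True then show ?thesis using spec_norm_nonneg[of B] by simp
  next
    case False
    then have "0 < norm ?z" by simp
    with * show ?thesis by (simp add: power2_eq_square)
  qed
qed

lemma qf_le_spec: "qf M x \<le> spec_norm M * (norm x)\<^sup>2"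
proof -
  have "qf M x \<le> norm x * norm (M *v x)" unfolding qf_def by (rule norm_cauchy_schwarz)
  also have "\<dots> \<le> norm x * (spec_norm M * norm x)" by (intro mult_left_mono spec_bound) auto
  finally show ?thesis by (simp add: power2_eq_square ac_simps)
qed

section \<open>Eigenvectors from extremal quadratic forms\<close>

lemma quad_coef_zero:
  fixes a b :: real
  assumes "\<And>t. 0 \<le> a * t + b * t\<^sup>2"
  shows "a = 0"
proof (rule ccontr)
  assume "a \<noteq> 0"
  define t where "t = - a / (2 * (\<bar>b\<bar> + 1))"
  have pos: "0 < 2 * (\<bar>b\<bar> + 1)" by simp
  have "a * t + b * t\<^sup>2 = - a\<^sup>2 / (2 * (\<bar>b\<bar> + 1)) + b * a\<^sup>2 / (2 * (\<bar>b\<bar> + 1))\<^sup>2"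
    unfolding t_def by (simp add: power2_eq_square field_simps)
  also have "\<dots> \<le> - a\<^sup>2 / (2 * (\<bar>b\<bar> + 1)) + \<bar>b\<bar> * a\<^sup>2 / (2 * (\<bar>b\<bar> + 1))\<^sup>2"
    by (intro add_left_mono divide_right_mono mult_right_mono) auto
  also have "\<dots> < 0"
  proof -
    have a2: "0 < a\<^sup>2" using \<open>a \<noteq> 0\<close> by simp
    have "\<bar>b\<bar> * a\<^sup>2 / (2 * (\<bar>b\<bar> + 1))\<^sup>2 = (\<bar>b\<bar> / (2 * (\<bar>b\<bar> + 1))) * (a\<^sup>2 / (2 * (\<bar>b\<bar> + 1)))"
      by (simp add: power2_eq_square field_simps)
    also have "\<dots> < 1 * (a\<^sup>2 / (2 * (\<bar>b\<bar> + 1)))"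
      by (intro mult_strict_right_mono) (use a2 in \<open>auto simp: field_simps\<close>)
    finally show ?thesis by simp
  qed
  finally show False using assms[of t] by simp
qed

lemma qf_plus:
  assumes "transpose (S::real^'n^'n) = S"
  shows "qf S (x + y) = qf S x + 2 * (y \<bullet> (S *v x)) + qf S y"
proof -
  have "x \<bullet> (S *v y) = y \<bullet> (S *v x)" by (rule symm_inner[OF assms])
  then show ?thesis
    by (simp add: qf_def matrix_vector_right_distrib inner_add_left inner_add_right)
qed

lemma symm_qf_zero:
  assumes "transpose (S::real^'n^'n) = S" "\<And>x. qf S x = 0"
  shows "S = 0"
proof -
  have "S *v x = 0" for x
  proof -
    have "qf S (x + S *v x) = qf S x + 2 * ((S *v x) \<bullet> (S *v x)) + qf S (S *v x)"
      by (rule qf_plus[OF assms(1)])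
    then have "(S *v x) \<bullet> (S *v x) = 0" using assms(2) by simp
    then show ?thesis by simp
  qed
  then show ?thesis by (metis matrix_eq matrix_vector_mult_0)
qed

lemma min_eigen:
  assumes sym: "transpose (S::real^'n^'n) = S"
  shows "\<exists>v m. norm v = 1 \<and> S *v v = m *\<^sub>R v \<and> (\<forall>x. m * (norm x)\<^sup>2 \<le> qf S x)"
proof -
  have cont: "continuous_on (sphere 0 1) (qf S)"
    unfolding qf_def by (intro continuous_intros linear_continuous_on) auto
  have ne: "sphere (0::real^'n) 1 \<noteq> {}"
    using norm_axis_1[where 'a='n] by (metis mem_sphere_0 empty_iff)
  obtain v where v: "v \<in> sphere 0 1" and vmin: "\<And>y. y \<in> sphere 0 1 \<Longrightarrow> qf S v \<le> qf S y"
    using continuous_attains_inf[OF compact_sphere ne cont] by blast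
  define m where "m = qf S v"
  have nv: "norm v = 1" using v by simp
  have lb: "m * (norm x)\<^sup>2 \<le> qf S x" for x
  proof (cases "x = 0")
    case True then show ?thesis by (simp add: qf_def)
  next
    case False
    define u where "u = (1 / norm x) *\<^sub>R x"
    have "u \<in> sphere 0 1" using False by (simp add: u_def)
    then have "m \<le> qf S u" using vmin m_def by simp
    also have "qf S u = qf S x / (norm x)\<^sup>2"
      using False by (simp add: u_def qf_smult power2_eq_square field_simps)
    finally show ?thesis using False by (simp add: field_simps)
  qed
  have "(S *v v - m *\<^sub>R v) = 0"
  proof -
    define y where "y = S *v v - m *\<^sub>R v"
    have "0 \<le> (2 * (y \<bullet> (S *v v)) - 2 * m * (v \<bullet> y)) * t + (qf S y - m * (norm y)\<^sup>2) * t\<^sup>2" for t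
    proof -
      have "m * (norm (v + t *\<^sub>R y))\<^sup>2 \<le> qf S (v + t *\<^sub>R y)" by (rule lb)
      also have "qf S (v + t *\<^sub>R y) = m + 2 * t * (y \<bullet> (S *v v)) + t\<^sup>2 * qf S y"
        using qf_plus[OF sym, of v "t *\<^sub>R y"] by (simp add: qf_smult m_def)
      also have "(norm (v + t *\<^sub>R y))\<^sup>2 = 1 + 2 * t * (v \<bullet> y) + t\<^sup>2 * (norm y)\<^sup>2"
      proof -
        have "(norm (v + t *\<^sub>R y))\<^sup>2 = (v + t *\<^sub>R y) \<bullet> (v + t *\<^sub>R y)"
          by (simp only: power2_norm_eq_inner)
        also have "\<dots> = v \<bullet> v + 2 * t * (v \<bullet> y) + t\<^sup>2 * (y \<bullet> y)"
          by (simp add: inner_add_left inner_add_right inner_commute power2_eq_square algebra_simps)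
        finally show ?thesis using nv by (simp add: power2_norm_eq_inner[symmetric])
      qed
      finally show ?thesis by (simp add: algebra_simps)
    qed
    then have "2 * (y \<bullet> (S *v v)) - 2 * m * (v \<bullet> y) = 0" by (rule quad_coef_zero)
    then have "y \<bullet> y = 0" by (simp add: y_def inner_diff_left inner_diff_right inner_commute algebra_simps)
    then show ?thesis by (simp add: y_def)
  qed
  then have "S *v v = m *\<^sub>R v" by simp
  with nv lb show ?thesis by blast
qed

lemma max_eigen:
  assumes sym: "transpose (S::real^'n^'n) = S"
  shows "\<exists>v m. norm v = 1 \<and> S *v v = m *\<^sub>R v \<and> (\<forall>x. qf S x \<le> m * (norm x)\<^sup>2)"
proof -
  have "transpose (- S) = - S" using sym by (simp add: transpose_uminus)
  from min_eigen[OF this] obtain v m where v: "norm v = 1" "(- S) *v v = m *\<^sub>R v"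
    and h: "\<And>x. m * (norm x)\<^sup>2 \<le> qf (- S) x" by blast
  have "S *v v = (- m) *\<^sub>R v" using v(2) by (simp add: matrix_vector_mult_uminus_left) (metis minus_minus)
  moreover have "qf S x \<le> (- m) * (norm x)\<^sup>2" for x
    using h[of x] by (simp add: qf_def matrix_vector_mult_uminus_left)
  ultimately show ?thesis using v(1) by blast
qed


section \<open>Rank-one decomposition of PSD matrices\<close>

definition osum :: "(real^'n) list \<Rightarrow> real^'n^'n" where
  "osum vs = sum_list (map (\<lambda>v. outer v v) vs)"

lemma osum_Nil[simp]: "osum [] = 0" by (simp add: osum_def)
lemma osum_Cons[simp]: "osum (v # vs) = outer v v + osum vs" by (simp add: osum_def)

lemma outer_scaleR: "outer (c *\<^sub>R v) (c *\<^sub>R v) = c\<^sup>2 *\<^sub>R outer v v"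
  by (simp add: outer_def vec_eq_iff power2_eq_square algebra_simps)

lemma psd_max_eigen:
  assumes "psd_mat (S::real^'n^'n)" "S \<noteq> 0"
  shows "\<exists>v l. norm v = 1 \<and> 0 < l \<and> S *v v = l *\<^sub>R v"
proof -
  have sym: "transpose S = S" using assms(1) by (simp add: psd_mat_def)
  obtain v l where v: "norm v = 1" "S *v v = l *\<^sub>R v" and ub: "\<And>x. qf S x \<le> l * (norm x)\<^sup>2"
    using max_eigen[OF sym] by blast
  have "0 < l"
  proof (rule ccontr)
    assume "\<not> 0 < l"
    then have "qf S x = 0" for x
      using ub[of x] psd_qf[OF assms(1), of x] by (smt (verit) mult_nonpos_nonneg zero_le_power2)
    then have "S = 0" by (rule symm_qf_zero[OF sym])
    with assms(2) show False by simp
  qed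
  with v show ?thesis by blast
qed

lemma subspace_range_mv: "subspace (range ((*v) (M::real^'n^'m)))"
  unfolding subspace_def
proof (intro conjI ballI allI)
  show "0 \<in> range ((*v) M)" by (metis matrix_vector_mult_0_right rangeI)
  fix x y assume "x \<in> range ((*v) M)" "y \<in> range ((*v) M)"
  then obtain a b where "x = M *v a" "y = M *v b" by auto
  then have "x + y = M *v (a + b)" by (simp add: matrix_vector_right_distrib)
  then show "x + y \<in> range ((*v) M)" by simp
next
  fix c x assume "x \<in> range ((*v) M)"
  then obtain a where "x = M *v a" by auto
  then have "c *\<^sub>R x = M *v (c *\<^sub>R a)" by (simp add: matrix_vector_mult_scaleR)
  then show "c *\<^sub>R x \<in> range ((*v) M)" by simp
qed

lemma psd_decomp: "psd_mat (S::real^'n^'n) \<Longrightarrow> \<exists>vs. S = osum vs"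
proof (induction "dim (range ((*v) S))" arbitrary: S rule: less_induct)
  case less
  show ?case
  proof (cases "S = 0")
    case True then show ?thesis by (intro exI[of _ "[]"]) simp
  next
    case False
    obtain v l where v: "norm v = 1" "0 < l" "S *v v = l *\<^sub>R v"
      using psd_max_eigen[OF less.prems False] by blast
    have sym: "transpose S = S" using less.prems by (simp add: psd_mat_def)
    have vv: "v \<bullet> v = 1" using v(1) by (simp add: norm_eq_1)
    define S' where "S' = S - l *\<^sub>R outer v v"
    have S'x: "S' *v x = S *v (x - (v \<bullet> x) *\<^sub>R v)" for x
      using v(3) by (simp add: S'_def matrix_vector_mult_diff_rdistrib matrix_vector_mult_scaleR_left
          outer_mult_vec matrix_vector_mult_diff_distrib matrix_vector_mult_scaleR inner_commute)
    have psd': "psd_mat S'"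
      unfolding psd_iff
    proof
      show "transpose S' = S'" using sym by (simp add: S'_def transpose_diff transpose_scalar transpose_outer)
      show "\<forall>x. 0 \<le> qf S' x"
      proof
        fix x
        define w where "w = x - (v \<bullet> x) *\<^sub>R v"
        have wv: "w \<bullet> (S *v v) = 0"
          using v vv by (simp add: w_def inner_diff_left inner_diff_right inner_commute)
        have "x = (v \<bullet> x) *\<^sub>R v + w" by (simp add: w_def)
        then have "qf S x = qf S ((v \<bullet> x) *\<^sub>R v) + 2 * (w \<bullet> (S *v ((v \<bullet> x) *\<^sub>R v))) + qf S w"
          by (metis qf_plus[OF sym])
        also have "\<dots> = (v \<bullet> x)\<^sup>2 * l + qf S w"
          using wv v vv by (simp add: qf_smult matrix_vector_mult_scaleR qf_def power2_eq_square)
        finally have "qf S' x = qf S w"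
          by (simp add: S'_def qf_diff qf_scaleR qf_outer)
        then show "0 \<le> qf S' x" using psd_qf[OF less.prems] by simp
      qed
    qed
    have sub: "range ((*v) S') \<subseteq> range ((*v) S)" using S'x by auto
    have vin: "v \<in> range ((*v) S)"
    proof
      show "v = S *v ((1/l) *\<^sub>R v)" using v by (simp add: matrix_vector_mult_scaleR)
    qed simp
    have vnot: "v \<notin> range ((*v) S')"
    proof
      assume "v \<in> range ((*v) S')"
      then obtain x where x: "v = S' *v x" by auto
      have "v \<bullet> (S' *v x) = 0"
      proof -
        have "v \<bullet> (S' *v x) = (S *v v) \<bullet> (x - (v \<bullet> x) *\<^sub>R v)"
          by (simp add: S'x symm_inner[OF sym, of v]) (rule inner_commute)
        also have "\<dots> = 0" using v vv by (simp add: inner_diff_right inner_commute)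
        finally show ?thesis .
      qed
      with x v(1) show False by (metis inner_eq_zero_iff norm_zero zero_neq_one)
    qed
    have ss: "subspace (range ((*v) S))" "subspace (range ((*v) S'))"
      by (rule subspace_range_mv)+
    have "span (range ((*v) S')) \<subset> span (range ((*v) S))"
      using sub vin vnot ss by (simp add: span_eq_iff[THEN iffD2]) blast
    then have "dim (range ((*v) S')) < dim (range ((*v) S))" by (rule dim_psubset)
    from less.hyps[OF this psd'] obtain vs where "S' = osum vs" by blast
    moreover have "S = l *\<^sub>R outer v v + S'" by (simp add: S'_def)
    ultimately have "S = osum (sqrt l *\<^sub>R v # vs)"
      using v(2) by (simp add: outer_scaleR)
    then show ?thesis by blast
  qed
qed

lemma trace_osum: "trace (N ** osum vs) = sum_list (map (qf N) vs)"
  by (induction vs) (simp_all add: matrix_add_ldistrib trace_add trace_outer trace_zero)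

lemma trace_osum_self: "trace (osum vs) = sum_list (map (\<lambda>v. (norm v)\<^sup>2) vs)"
  by (induction vs) (simp_all add: trace_add trace_outer' trace_zero power2_norm_eq_inner)

lemma trace_psd_upper:
  assumes "psd_mat S" "\<And>x. qf N x \<le> c * (norm x)\<^sup>2"
  shows "trace (N ** S) \<le> c * trace S"
proof -
  obtain vs where S: "S = osum vs" using psd_decomp[OF assms(1)] by blast
  have "sum_list (map (qf N) vs) \<le> c * sum_list (map (\<lambda>v. (norm v)\<^sup>2) vs)"
    using assms(2) by (induction vs) (auto simp: algebra_simps intro: add_mono)
  then show ?thesis by (simp add: S trace_osum trace_osum_self)
qed

lemma trace_psd_lower:
  assumes "psd_mat S" "\<And>x. c * (norm x)\<^sup>2 \<le> qf N x"
  shows "c * trace S \<le> trace (N ** S)"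
proof -
  obtain vs where S: "S = osum vs" using psd_decomp[OF assms(1)] by blast
  have "c * sum_list (map (\<lambda>v. (norm v)\<^sup>2) vs) \<le> sum_list (map (qf N) vs)"
    using assms(2) by (induction vs) (auto simp: algebra_simps intro: add_mono)
  then show ?thesis by (simp add: S trace_osum trace_osum_self)
qed

lemma trace_psd_nonneg:
  assumes "psd_mat S" "\<And>x. 0 \<le> qf N x"
  shows "0 \<le> trace (N ** S)"
  using trace_psd_lower[OF assms(1), of 0 N] assms(2) by simp

lemma trace_psd_psd: "psd_mat N \<Longrightarrow> psd_mat S \<Longrightarrow> 0 \<le> trace (N ** S)"
  by (rule trace_psd_nonneg) (auto simp: psd_qf)

lemma trace_psd_ge0: "psd_mat S \<Longrightarrow> 0 \<le> trace S"
  using trace_psd_psd[OF psd_mat_1, of S] by simp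

lemma spec_le_trace:
  assumes "psd_mat (S::real^'n^'n)"
  shows "spec_norm S \<le> trace S"
proof -
  obtain vs where S: "S = osum vs" using psd_decomp[OF assms] by blast
  have "norm (osum vs *v x) \<le> trace (osum vs) * norm x" for x
  proof (induction vs)
    case Nil then show ?case by (simp add: trace_zero)
  next
    case (Cons v vs)
    have "norm (outer v v *v x) \<le> (norm v)\<^sup>2 * norm x"
    proof -
      have "norm (outer v v *v x) = \<bar>v \<bullet> x\<bar> * norm v" by (simp add: outer_mult_vec)
      also have "\<dots> \<le> (norm v * norm x) * norm v" by (intro mult_right_mono Cauchy_Schwarz_ineq2) auto
      finally show ?thesis by (simp add: power2_eq_square ac_simps)
    qed
    with Cons show ?case
      by (simp add: matrix_vector_mult_add_rdistrib trace_add trace_outer' power2_norm_eq_inner[symmetric]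
          distrib_right norm_triangle_le add_mono)
  qed
  then show ?thesis unfolding S by (rule spec_norm_le)
qed

lemma psd_entry_bound:
  assumes "psd_mat (S::real^'n^'n)"
  shows "\<bar>S $ a $ b\<bar> \<le> trace S"
proof -
  have "\<bar>S $ a $ b\<bar> = \<bar>axis a 1 \<bullet> (S *v axis b 1)\<bar>"
    by (simp add: inner_axis' matrix_vector_mul_component inner_axis)
  also have "\<dots> \<le> norm (axis a (1::real)) * norm (S *v axis b 1)" by (rule Cauchy_Schwarz_ineq2)
  also have "\<dots> \<le> 1 * (spec_norm S * 1)" using spec_bound[of S "axis b 1"] by simp
  also have "\<dots> \<le> trace S" using spec_le_trace[OF assms] by simp
  finally show ?thesis .
qed

lemma sigma_min_le_norm: "norm x = 1 \<Longrightarrow> sigma_min M \<le> norm (M *v x)"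
  unfolding sigma_min_def by (rule cInf_lower) (auto intro!: bdd_belowI[of _ 0])

lemma sigma_min_le_spec: "sigma_min (M::real^'n^'m) \<le> spec_norm M"
proof -
  have "sigma_min M \<le> norm (M *v axis undefined 1)" by (rule sigma_min_le_norm) (simp add: norm_axis_1)
  also have "\<dots> \<le> spec_norm M * norm (axis (undefined::'n) (1::real))" by (rule spec_bound)
  finally show ?thesis by (simp add: norm_axis_1)
qed

lemma sigma_min_ge: "(\<And>x. norm x = 1 \<Longrightarrow> c \<le> norm ((M::real^'n^'m) *v x)) \<Longrightarrow> c \<le> sigma_min M"
  unfolding sigma_min_def
  by (rule cInf_greatest) (auto intro: exI[of _ "axis undefined 1"] simp: norm_axis_1)

lemma psd_sigma_min_qf:
  assumes "psd_mat (S::real^'n^'n)"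
  shows "sigma_min S * (norm x)\<^sup>2 \<le> qf S x"
proof -
  have sym: "transpose S = S" using assms by (simp add: psd_mat_def)
  obtain v m where v: "norm v = 1" "S *v v = m *\<^sub>R v" and lb: "\<And>x. m * (norm x)\<^sup>2 \<le> qf S x"
    using min_eigen[OF sym] by blast
  have "m = qf S v" using v by (simp add: qf_def power2_norm_eq_inner[symmetric])
  then have m0: "0 \<le> m" using psd_qf[OF assms] by simp
  have "sigma_min S \<le> norm (S *v v)" by (rule sigma_min_le_norm[OF v(1)])
  also have "\<dots> = m" using v m0 by simp
  finally show ?thesis using lb[of x] by (meson mult_right_mono order_trans zero_le_power2)
qed

lemma pd_sigma_min_pos:
  assumes "pd_mat (S::real^'n^'n)"
  shows "0 < sigma_min S"
proof -
  have sym: "transpose S = S" using assms by (simp add: pd_mat_def)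
  obtain v m where v: "norm v = 1" "S *v v = m *\<^sub>R v" and lb: "\<And>x. m * (norm x)\<^sup>2 \<le> qf S x"
    using min_eigen[OF sym] by blast
  have "m = qf S v" using v by (simp add: qf_def power2_norm_eq_inner[symmetric])
  moreover have "v \<noteq> 0" using v(1) by auto
  ultimately have m0: "0 < m" using assms unfolding pd_mat_def qf_def by auto
  have "m \<le> sigma_min S"
  proof (rule sigma_min_ge)
    fix x :: "real^'n" assume x: "norm x = 1"
    have "m = m * (norm x)\<^sup>2" using x by simp
    also have "\<dots> \<le> qf S x" by (rule lb)
    also have "\<dots> \<le> norm x * norm (S *v x)" unfolding qf_def by (rule norm_cauchy_schwarz)
    finally show "m \<le> norm (S *v x)" using x by simp
  qed
  with m0 show ?thesis by simp
qed


definition Lop :: "('s::finite \<Rightarrow> real^'d^'d) \<Rightarrow> ('s \<Rightarrow> real^'k^'d) \<Rightarrow> ('s \<Rightarrow> 's \<Rightarrow> real)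
    \<Rightarrow> ('s \<Rightarrow> real^'d^'k) \<Rightarrow> ('s \<Rightarrow> real^'d^'d) \<Rightarrow> 's \<Rightarrow> real^'d^'d" where
  "Lop A B p K P i = transpose (Gam A B K i) ** Eop p P i ** Gam A B K i"

definition ip :: "('s::finite \<Rightarrow> real^'d^'d) \<Rightarrow> ('s \<Rightarrow> real^'d^'d) \<Rightarrow> real" where
  "ip P V = (\<Sum>i\<in>UNIV. trace (P i ** V i))"

definition psdT :: "('s \<Rightarrow> real^'d^'d) \<Rightarrow> bool" where
  "psdT V \<longleftrightarrow> (\<forall>i. psd_mat (V i))"

definition QK :: "('s \<Rightarrow> real^'d^'d) \<Rightarrow> ('s \<Rightarrow> real^'k^'k) \<Rightarrow> ('s \<Rightarrow> real^'d^'k) \<Rightarrow> 's \<Rightarrow> real^'d^'d" where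
  "QK Q R K i = Q i + transpose (K i) ** R i ** K i"

lemma trace_congr_swap: "trace (P ** (G ** V ** transpose G)) = trace ((transpose G ** P ** G) ** (V::real^'n^'n))"
proof -
  have "trace (P ** (G ** V ** transpose G)) = trace ((P ** G ** V) ** transpose G)"
    by (simp add: matrix_mul_assoc)
  also have "\<dots> = trace (transpose G ** (P ** G ** V))" by (rule trace_mul_sym)
  also have "\<dots> = trace ((transpose G ** P ** G) ** V)" by (simp add: matrix_mul_assoc)
  finally show ?thesis .
qed

lemma Eop_scaleR_sum: "Eop p P i = (\<Sum>j\<in>UNIV. p i j *\<^sub>R P j)"
  by (simp add: Eop_def)

lemma ip_Top: "ip P (Top A B p K V) = ip (Lop A B p K P) V"
proof -
  let ?G = "Gam A B K"
  have "ip P (Top A B p K V) = (\<Sum>j\<in>UNIV. \<Sum>i\<in>UNIV. p i j * trace (P j ** (?G i ** V i ** transpose (?G i))))"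
    by (simp add: ip_def Top_def matrix_sum_right matrix_scaleR_right trace_sum trace_scaleR)
  also have "\<dots> = (\<Sum>i\<in>UNIV. \<Sum>j\<in>UNIV. p i j * trace ((transpose (?G i) ** P j ** ?G i) ** V i))"
    by (subst sum.swap) (simp add: trace_congr_swap)
  also have "\<dots> = ip (Lop A B p K P) V"
    by (simp add: ip_def Lop_def Eop_def matrix_sum_right matrix_sum_left matrix_scaleR_right
        matrix_scaleR_left trace_sum trace_scaleR)
  finally show ?thesis .
qed

lemma ip_Topn: "ip P ((Top A B p K ^^ n) V) = ip ((Lop A B p K ^^ n) P) V"
proof (induction n arbitrary: P)
  case 0 then show ?case by simp
next
  case (Suc n)
  have "ip P ((Top A B p K ^^ Suc n) V) = ip (Lop A B p K P) ((Top A B p K ^^ n) V)"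
    by (simp add: ip_Top)
  also have "\<dots> = ip ((Lop A B p K ^^ n) (Lop A B p K P)) V" by (rule Suc)
  also have "\<dots> = ip ((Lop A B p K ^^ Suc n) P) V" by (simp add: funpow_Suc_right del: funpow.simps)
  finally show ?case .
qed

lemma qf_Top: "qf (Top A B p K V j) x = (\<Sum>i\<in>UNIV. p i j * qf (V i) (transpose (Gam A B K i) *v x))"
  by (simp add: Top_def qf_sum qf_scaleR qf_congr')

lemma qf_Lop: "qf (Lop A B p K P i) x = (\<Sum>j\<in>UNIV. p i j * qf (P j) (Gam A B K i *v x))"
  by (simp add: Lop_def Eop_def qf_congr qf_sum qf_scaleR)

lemma Top_add: "Top A B p K (\<lambda>i. V i + W i) = (\<lambda>j. Top A B p K V j + Top A B p K W j)"
  by (simp add: fun_eq_iff Top_def matrix_add_ldistrib matrix_add_rdistrib scaleR_add_right sum.distrib)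

lemma Top_scale: "Top A B p K (\<lambda>i. c *\<^sub>R V i) = (\<lambda>j. c *\<^sub>R Top A B p K V j)"
  by (simp add: fun_eq_iff Top_def matrix_scaleR_left matrix_scaleR_right scaleR_sum_right mult.commute)

lemma Top_diff: "Top A B p K (\<lambda>i. V i - W i) = (\<lambda>j. Top A B p K V j - Top A B p K W j)"
  by (simp add: fun_eq_iff Top_def matrix_diff_ldistrib matrix_diff_rdistrib scaleR_diff_right sum_subtractf)

lemma Lop_add: "Lop A B p K (\<lambda>i. V i + W i) = (\<lambda>j. Lop A B p K V j + Lop A B p K W j)"
  by (simp add: fun_eq_iff Lop_def Eop_def matrix_add_ldistrib matrix_add_rdistrib scaleR_add_right sum.distrib)

lemma Eop_scale: "Eop p (\<lambda>i. c *\<^sub>R V i) j = c *\<^sub>R Eop p V j"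
  by (simp add: Eop_def scaleR_sum_right mult.commute)

lemma Lop_scale: "Lop A B p K (\<lambda>i. c *\<^sub>R V i) = (\<lambda>j. c *\<^sub>R Lop A B p K V j)"
  by (simp add: fun_eq_iff Lop_def Eop_scale matrix_scaleR_left matrix_scaleR_right)

lemma Lop_diff: "Lop A B p K (\<lambda>i. V i - W i) = (\<lambda>j. Lop A B p K V j - Lop A B p K W j)"
  by (simp add: fun_eq_iff Lop_def Eop_def matrix_diff_ldistrib matrix_diff_rdistrib scaleR_diff_right sum_subtractf)

lemma Topn_add: "(Top A B p K ^^ n) (\<lambda>i. V i + W i) = (\<lambda>j. (Top A B p K ^^ n) V j + (Top A B p K ^^ n) W j)"
  by (induction n) (simp_all add: Top_add)

lemma Topn_scale: "(Top A B p K ^^ n) (\<lambda>i. c *\<^sub>R V i) = (\<lambda>j. c *\<^sub>R (Top A B p K ^^ n) V j)"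
  by (induction n) (simp_all add: Top_scale)

lemma Topn_diff: "(Top A B p K ^^ n) (\<lambda>i. V i - W i) = (\<lambda>j. (Top A B p K ^^ n) V j - (Top A B p K ^^ n) W j)"
  by (induction n) (simp_all add: Top_diff)

lemma Lopn_diff: "(Lop A B p K ^^ n) (\<lambda>i. V i - W i) = (\<lambda>j. (Lop A B p K ^^ n) V j - (Lop A B p K ^^ n) W j)"
  by (induction n) (simp_all add: Lop_diff)

lemma Lopn_scale: "(Lop A B p K ^^ n) (\<lambda>i. c *\<^sub>R V i) = (\<lambda>j. c *\<^sub>R (Lop A B p K ^^ n) V j)"
  by (induction n) (simp_all add: Lop_scale)

lemma Top_transpose: "transpose (Top A B p K V j) = Top A B p K (\<lambda>i. transpose (V i)) j"
  by (simp add: Top_def transpose_sum transpose_scalar matrix_transpose_mul matrix_mul_assoc)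

lemma Lop_transpose: "transpose (Lop A B p K V j) = Lop A B p K (\<lambda>i. transpose (V i)) j"
  by (simp add: Lop_def Eop_def transpose_sum transpose_scalar matrix_transpose_mul matrix_mul_assoc)

context
  fixes p :: "'s::finite \<Rightarrow> 's \<Rightarrow> real"
  assumes p_nonneg: "\<And>i j. 0 \<le> p i j"
begin

lemma Top_psd: "psdT V \<Longrightarrow> psdT (Top A B p K V)"
  unfolding psdT_def
  by (auto simp: Top_def intro!: psd_sum psd_scaleR psd_congr' p_nonneg)

lemma Topn_psd: "psdT V \<Longrightarrow> psdT ((Top A B p K ^^ n) V)"
  by (induction n) (simp_all add: Top_psd)

lemma Lop_psd: "psdT V \<Longrightarrow> psdT (Lop A B p K V)"
  unfolding psdT_def
  by (auto simp: Lop_def Eop_def intro!: psd_sum psd_scaleR psd_congr p_nonneg)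

lemma Lopn_psd: "psdT V \<Longrightarrow> psdT ((Lop A B p K ^^ n) V)"
  by (induction n) (simp_all add: Lop_psd)

lemma Top_mono:
  assumes "\<And>i x. qf (V i) x \<le> qf (W i) x"
  shows "qf (Top A B p K V j) x \<le> qf (Top A B p K W j) x"
  unfolding qf_Top by (intro sum_mono mult_left_mono assms p_nonneg)

lemma Topn_mono:
  assumes "\<And>i x. qf (V i) x \<le> qf (W i) x"
  shows "qf ((Top A B p K ^^ n) V j) x \<le> qf ((Top A B p K ^^ n) W j) x"
  using assms by (induction n arbitrary: j x) (simp_all add: Top_mono)

lemma Lop_mono:
  assumes "\<And>i x. qf (V i) x \<le> qf (W i) x"
  shows "qf (Lop A B p K V j) x \<le> qf (Lop A B p K W j) x"
  unfolding qf_Lop by (intro sum_mono mult_left_mono assms p_nonneg)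

lemma Lopn_mono:
  assumes "\<And>i x. qf (V i) x \<le> qf (W i) x"
  shows "qf ((Lop A B p K ^^ n) V j) x \<le> qf ((Lop A B p K ^^ n) W j) x"
  using assms by (induction n arbitrary: j x) (simp_all add: Lop_mono)

end

lemma ip_psd_nonneg: "psdT V \<Longrightarrow> psdT W \<Longrightarrow> 0 \<le> ip V W"
  unfolding ip_def psdT_def by (auto intro!: sum_nonneg trace_psd_psd)


lemma norm_mat_le_entries: "norm (W::real^'n^'m) \<le> (\<Sum>a\<in>UNIV. \<Sum>b\<in>UNIV. \<bar>W $ a $ b\<bar>)"
proof -
  have "norm W \<le> (\<Sum>a\<in>UNIV. norm (W $ a))"
    unfolding norm_vec_def by (rule L2_set_le_sum) simp
  also have "\<dots> \<le> (\<Sum>a\<in>UNIV. \<Sum>b\<in>UNIV. \<bar>W $ a $ b\<bar>)"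
    by (intro sum_mono norm_le_l1_cart)
  finally show ?thesis .
qed

lemma summable_real_geom:
  fixes g :: "nat \<Rightarrow> real"
  assumes "\<And>t. \<bar>g t\<bar> \<le> C * \<rho> ^ t" "0 \<le> \<rho>" "\<rho> < 1"
  shows "summable g"
proof (rule summable_comparison_test)
  show "\<exists>N. \<forall>n\<ge>N. norm (g n) \<le> C * \<rho> ^ n" using assms(1) by auto
  show "summable (\<lambda>n. C * \<rho> ^ n)" using assms(2,3) by (intro summable_mult summable_geometric) simp
qed

lemma summable_mat_geom:
  fixes f :: "nat \<Rightarrow> real^'n^'m"
  assumes "\<And>t a b. \<bar>f t $ a $ b\<bar> \<le> C * \<rho> ^ t" "0 \<le> \<rho>" "\<rho> < 1"
  shows "summable f"
proof (rule summable_comparison_test)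
  have "norm (f n) \<le> (real CARD('m) * real CARD('n) * C) * \<rho> ^ n" for n
  proof -
    have "norm (f n) \<le> (\<Sum>a\<in>UNIV. \<Sum>b\<in>UNIV. \<bar>f n $ a $ b\<bar>)" by (rule norm_mat_le_entries)
    also have "\<dots> \<le> (\<Sum>a\<in>(UNIV::'m set). \<Sum>b\<in>(UNIV::'n set). C * \<rho> ^ n)"
      by (intro sum_mono assms(1))
    finally show ?thesis by simp
  qed
  then show "\<exists>N. \<forall>n\<ge>N. norm (f n) \<le> (real CARD('m) * real CARD('n) * C) * \<rho> ^ n" by auto
  show "summable (\<lambda>n. (real CARD('m) * real CARD('n) * C) * \<rho> ^ n)"
    using assms(2,3) by (intro summable_mult summable_geometric) simp
qed

lemma bl_congr: "bounded_linear (\<lambda>X. (G1::real^'n^'m) ** (X::real^'n^'n) ** (G2::real^'p^'n))"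
  by (rule bounded_linearI') (simp_all add: matrix_add_ldistrib matrix_add_rdistrib matrix_scaleR_left matrix_scaleR_right)

lemma bl_trace_left: "bounded_linear (\<lambda>X. trace ((X::real^'n^'n) ** Y))"
  by (rule bounded_linearI') (simp_all add: matrix_add_rdistrib matrix_scaleR_left trace_add trace_scaleR)

lemma bl_trace_right: "bounded_linear (\<lambda>X. trace (Y ** (X::real^'n^'n)))"
  by (rule bounded_linearI') (simp_all add: matrix_add_ldistrib matrix_scaleR_right trace_add trace_scaleR)

lemma bl_qf: "bounded_linear (\<lambda>X. qf (X::real^'n^'n) x)"
  by (rule bounded_linearI') (simp_all add: qf_add qf_scaleR)

lemma bl_transpose: "bounded_linear (\<lambda>X. transpose (X::real^'n^'m))"
  by (rule bounded_linearI') (simp_all add: transpose_add transpose_scalar)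

lemma psd_suminf:
  assumes "summable f" "\<And>t. psd_mat (f t)"
  shows "psd_mat (suminf f)"
  unfolding psd_iff
proof
  have "transpose (suminf f) = (\<Sum>t. transpose (f t))"
    by (rule bounded_linear.suminf[OF bl_transpose assms(1)])
  also have "\<dots> = suminf f" using assms(2) by (simp add: psd_mat_def)
  finally show "transpose (suminf f) = suminf f" .
  show "\<forall>x. 0 \<le> qf (suminf f) x"
  proof
    fix x
    have "qf (suminf f) x = (\<Sum>t. qf (f t) x)"
      by (rule bounded_linear.suminf[OF bl_qf assms(1)])
    also have "0 \<le> \<dots>"
      by (intro suminf_nonneg bounded_linear.summable[OF bl_qf assms(1)] psd_qf assms(2))
    finally show "0 \<le> qf (suminf f) x" .
  qed
qed

lemma trace_entries: "trace ((X::real^'n^'n) ** Y) = (\<Sum>a\<in>UNIV. \<Sum>b\<in>UNIV. X $ a $ b * Y $ b $ a)"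
  by (simp add: trace_def matrix_matrix_mult_def)

lemma ip_bound:
  assumes "\<And>i a b. \<bar>W i $ a $ b\<bar> \<le> e"
  shows "\<bar>ip M W\<bar> \<le> (\<Sum>i\<in>UNIV. \<Sum>a\<in>UNIV. \<Sum>b\<in>UNIV. \<bar>M i $ a $ b\<bar>) * e"
proof -
  have "\<bar>ip M W\<bar> \<le> (\<Sum>i\<in>UNIV. \<Sum>a\<in>UNIV. \<Sum>b\<in>UNIV. \<bar>M i $ a $ b * W i $ b $ a\<bar>)"
    unfolding ip_def trace_entries
    by (rule order_trans[OF sum_abs]) (intro sum_mono order_trans[OF sum_abs] sum_abs)
  also have "\<dots> \<le> (\<Sum>i\<in>UNIV. \<Sum>a\<in>UNIV. \<Sum>b\<in>UNIV. \<bar>M i $ a $ b\<bar> * e)"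
    by (intro sum_mono) (auto simp: abs_mult intro: mult_left_mono assms)
  finally show ?thesis by (simp add: sum_distrib_right)
qed

definition Eb :: "'s \<Rightarrow> 'n \<Rightarrow> 'n \<Rightarrow> 's \<Rightarrow> real^'n^'n" where
  "Eb i a b = (\<lambda>j. if j = i then outer (axis a 1) (axis b 1) else 0)"

lemma trace_outer_gen: "trace (M ** outer v w) = w \<bullet> (M *v v)"
  by (simp add: trace_def outer_def matrix_matrix_mult_def matrix_vector_mult_def
      inner_vec_def sum_distrib_left mult_ac)

lemma ip_Eb: "ip P (Eb i a b) = P i $ b $ a"
proof -
  have "ip P (Eb i a b) = (\<Sum>j\<in>UNIV. if j = i then trace (P i ** outer (axis a 1) (axis b 1)) else 0)"
    unfolding ip_def by (rule sum.cong) (auto simp: Eb_def trace_zero)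
  then have "ip P (Eb i a b) = trace (P i ** outer (axis a 1) (axis b 1))"
    by simp
  also have "\<dots> = P i $ b $ a"
    by (simp add: trace_outer_gen inner_axis' matrix_vector_mul_component inner_axis)
  finally show ?thesis .
qed

lemma spec_norm_outer_axis: "spec_norm (outer (axis a 1) (axis b 1) :: real^'n^'n) \<le> 1"
proof (rule spec_norm_le)
  fix x :: "real^'n"
  have "norm (outer (axis a 1) (axis b 1) *v x) = \<bar>axis b 1 \<bullet> x\<bar>"
    by (simp add: outer_mult_vec norm_axis_1)
  also have "\<dots> \<le> norm (axis b (1::real)) * norm x" by (rule Cauchy_Schwarz_ineq2)
  finally show "norm (outer (axis a 1) (axis b 1) *v x) \<le> 1 * norm x" by (simp add: norm_axis_1)
qed

lemma spec_norm_zero: "spec_norm (0::real^'n^'m) = 0"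
  by (rule antisym[OF spec_norm_le spec_norm_nonneg]) simp

lemma spec_sum_Eb:
  fixes a b :: "'n::finite" and i :: "'s::finite"
  shows "(\<Sum>j\<in>UNIV. spec_norm (Eb i a b j)) \<le> 1"
proof -
  have "(\<Sum>j\<in>UNIV. spec_norm (Eb i a b j)) = (\<Sum>j\<in>UNIV. if j = i then spec_norm (outer (axis a 1) (axis b 1) :: real^'n^'n) else 0)"
    by (rule sum.cong) (auto simp: Eb_def spec_norm_zero)
  then have "(\<Sum>j\<in>UNIV. spec_norm (Eb i a b j)) = spec_norm (outer (axis a 1) (axis b 1) :: real^'n^'n)"
    by simp
  then show ?thesis using spec_norm_outer_axis by simp
qed

lemma entry_to_zero:
  fixes x :: real
  assumes "\<And>t. \<bar>x\<bar> \<le> C * \<rho> ^ t" "0 \<le> \<rho>" "\<rho> < 1"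
  shows "x = 0"
proof -
  have "(\<lambda>t. C * \<rho> ^ t) \<longlonglongrightarrow> C * 0"
    using assms(2,3) by (intro tendsto_mult tendsto_const LIMSEQ_power_zero) simp
  then have "\<bar>x\<bar> \<le> 0" by (intro LIMSEQ_le_const) (use assms(1) in auto)
  then show ?thesis by simp
qed


section \<open>Geometric decay for stable gains\<close>

lemma qf_abs_le_entries: "qf M x \<le> (\<Sum>a\<in>UNIV. \<Sum>b\<in>UNIV. \<bar>M $ a $ b\<bar>) * (norm x)\<^sup>2"
proof -
  have "qf M x \<le> spec_norm M * (norm x)\<^sup>2" by (rule qf_le_spec)
  also have "\<dots> \<le> (\<Sum>a\<in>UNIV. \<Sum>b\<in>UNIV. \<bar>M $ a $ b\<bar>) * (norm x)\<^sup>2"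
    unfolding spec_norm_def by (intro mult_right_mono onorm_le_matrix_component_sum) auto
  finally show ?thesis .
qed

context
  fixes p :: "'s::finite \<Rightarrow> 's \<Rightarrow> real"
  assumes p_nonneg: "\<And>i j. 0 \<le> p i j"
begin

lemma Topn_scale_mono:
  assumes "\<And>i x. qf (V i) x \<le> c * (norm x)\<^sup>2"
  shows "qf ((Top A B p K ^^ n) V j) x \<le> c * qf ((Top A B p K ^^ n) (\<lambda>i. mat 1) j) x"
proof -
  have "qf ((Top A B p K ^^ n) V j) x \<le> qf ((Top A B p K ^^ n) (\<lambda>i. c *\<^sub>R mat 1) j) x"
    by (rule Topn_mono[OF p_nonneg]) (simp add: qf_scaleR qf_mat assms)
  also have "\<dots> = c * qf ((Top A B p K ^^ n) (\<lambda>i. mat 1) j) x"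
    by (simp add: Topn_scale qf_scaleR)
  finally show ?thesis .
qed

lemma stable_geom:
  fixes A :: "'s \<Rightarrow> real^'d::finite^'d" and B :: "'s \<Rightarrow> real^'k::finite^'d" and K :: "'s \<Rightarrow> real^'d^'k"
  assumes st: "ms_stable A B p K"
  shows "\<exists>c \<rho>. 0 \<le> c \<and> 0 \<le> \<rho> \<and> \<rho> < 1 \<and>
     (\<forall>t j x. qf ((Top A B p K ^^ t) (\<lambda>i. mat 1) j) x \<le> c * \<rho> ^ t * (norm x)\<^sup>2)"
proof -
  let ?T = "Top A B p K"
  let ?I = "(\<lambda>i::'s. mat 1 :: real^'d^'d)"
  have psdI: "psdT ?I" by (simp add: psdT_def psd_mat_1)
  have lim: "(\<lambda>t. (?T ^^ t) ?I j) \<longlonglongrightarrow> 0" for j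
    using st[unfolded ms_stable_def, THEN spec[of _ ?I]] psdI unfolding psdT_def by blast
  have "(\<lambda>t. \<Sum>a\<in>UNIV. \<Sum>b\<in>UNIV. \<bar>(?T ^^ t) ?I j $ a $ b\<bar>) \<longlonglongrightarrow> (\<Sum>a\<in>UNIV. \<Sum>b\<in>(UNIV::'d set). \<bar>(0::real^'d^'d) $ a $ b\<bar>)" for j
    by (intro tendsto_intros lim)
  then have "\<forall>\<^sub>F t in sequentially. (\<Sum>a\<in>UNIV. \<Sum>b\<in>UNIV. \<bar>(?T ^^ t) ?I j $ a $ b\<bar>) < 1/2" for j
    by (intro order_tendstoD) auto
  then have "\<forall>\<^sub>F t in sequentially. \<forall>j. (\<Sum>a\<in>UNIV. \<Sum>b\<in>UNIV. \<bar>(?T ^^ t) ?I j $ a $ b\<bar>) < 1/2"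
    by (rule eventually_all_finite)
  then obtain N0 where N0: "\<And>t j. t \<ge> N0 \<Longrightarrow> (\<Sum>a\<in>UNIV. \<Sum>b\<in>UNIV. \<bar>(?T ^^ t) ?I j $ a $ b\<bar>) < 1/2"
    unfolding eventually_sequentially by blast
  define N where "N = Suc N0"
  have N0lt: "0 < N" by (simp add: N_def)
  have hN: "qf ((?T ^^ N) ?I j) x \<le> (1/2) * (norm x)\<^sup>2" for j x
  proof -
    have "qf ((?T ^^ N) ?I j) x \<le> (\<Sum>a\<in>UNIV. \<Sum>b\<in>UNIV. \<bar>(?T ^^ N) ?I j $ a $ b\<bar>) * (norm x)\<^sup>2"
      by (rule qf_abs_le_entries)
    also have "\<dots> \<le> (1/2) * (norm x)\<^sup>2"
      using N0[of N j] by (intro mult_right_mono) (auto simp: N_def)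
    finally show ?thesis .
  qed
  define a where "a = max 1 (\<Sum>j\<in>UNIV. spec_norm (?T ?I j))"
  have a1: "1 \<le> a" by (simp add: a_def)
  have ha: "qf (?T ?I j) x \<le> a * (norm x)\<^sup>2" for j x
  proof -
    have "spec_norm (?T ?I j) \<le> (\<Sum>j\<in>UNIV. spec_norm (?T ?I j))"
      by (rule member_le_sum) (auto simp: spec_norm_nonneg)
    also have "\<dots> \<le> a" by (simp add: a_def)
    finally have "spec_norm (?T ?I j) \<le> a" .
    then show ?thesis using qf_le_spec[of "?T ?I j" x] by (meson mult_right_mono order_trans zero_le_power2)
  qed
  have pw: "qf ((?T ^^ t) ?I j) x \<le> a ^ t * (norm x)\<^sup>2" for t j x
  proof (induction t arbitrary: j x)
    case 0 then show ?case by (simp add: qf_mat)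
  next
    case (Suc t)
    have "qf ((?T ^^ Suc t) ?I j) x = qf ((?T ^^ t) (?T ?I) j) x"
      by (simp add: funpow_Suc_right del: funpow.simps)
    also have "\<dots> \<le> a * qf ((?T ^^ t) ?I j) x"
      by (rule Topn_scale_mono) (rule ha)
    also have "\<dots> \<le> a * (a ^ t * (norm x)\<^sup>2)"
      using a1 Suc by (intro mult_left_mono) auto
    finally show ?case by (simp add: mult.assoc)
  qed
  define \<rho> where "\<rho> = root N (1/2)"
  define c where "c = 2 * a ^ N"
  have \<rho>0: "0 \<le> \<rho>" "0 < \<rho>" using N0lt by (auto simp: \<rho>_def intro: real_root_gt_zero)
  have \<rho>1: "\<rho> < 1" using N0lt by (simp add: \<rho>_def)
  have \<rho>N: "\<rho> ^ N = 1/2" using N0lt by (simp add: \<rho>_def)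
  have main: "qf ((?T ^^ t) ?I j) x \<le> c * \<rho> ^ t * (norm x)\<^sup>2" for t j x
  proof (induction t arbitrary: j x rule: less_induct)
    case (less t)
    show ?case
    proof (cases "t < N")
      case True
      have "qf ((?T ^^ t) ?I j) x \<le> a ^ t * (norm x)\<^sup>2" by (rule pw)
      also have "\<dots> \<le> a ^ N * (norm x)\<^sup>2"
        using True a1 by (intro mult_right_mono power_increasing) auto
      also have "a ^ N = c * \<rho> ^ N" by (simp add: c_def \<rho>N)
      also have "c * \<rho> ^ N \<le> c * \<rho> ^ t"
        using True \<rho>0 \<rho>1 a1 by (intro mult_left_mono power_decreasing) (auto simp: c_def)
      finally show ?thesis by (simp add: mult_right_mono)
    next
      case False
      then obtain s where t: "t = s + N" by (metis add.commute le_add_diff_inverse not_less)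
      have "qf ((?T ^^ t) ?I j) x = qf ((?T ^^ s) ((?T ^^ N) ?I) j) x"
        by (simp add: t funpow_add)
      also have "\<dots> \<le> (1/2) * qf ((?T ^^ s) ?I j) x"
        by (rule Topn_scale_mono) (rule hN)
      also have "\<dots> \<le> (1/2) * (c * \<rho> ^ s * (norm x)\<^sup>2)"
        using less[of s] N0lt t by (intro mult_left_mono) auto
      also have "\<dots> = c * \<rho> ^ t * (norm x)\<^sup>2" by (simp add: t power_add \<rho>N)
      finally show ?thesis .
    qed
  qed
  have "0 \<le> c" using a1 by (simp add: c_def)
  with \<rho>0 \<rho>1 main show ?thesis by blast
qed

end


definition good :: "('s \<Rightarrow> real^'n^'n) \<Rightarrow> ('s \<Rightarrow> real^'n^'n) \<Rightarrow> bool" where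
  "good S V \<longleftrightarrow> (\<forall>j u v. \<bar>2 * (u \<bullet> (V j *v v))\<bar> \<le> qf (S j) u + qf (S j) v)"

lemma inner_congr': "u \<bullet> (((G::real^'n^'m) ** (V::real^'n^'n) ** transpose G) *v v) = (transpose G *v u) \<bullet> (V *v (transpose G *v v))"
proof -
  have e: "(G ** V ** transpose G) *v v = G *v (V *v (transpose G *v v))"
    by (simp only: matrix_vector_mul_assoc matrix_mul_assoc)
  show ?thesis unfolding e by (rule dot_transpose)
qed

lemma inner_Top: "u \<bullet> (Top A B p K V j *v v) =
   (\<Sum>i\<in>UNIV. p i j * ((transpose (Gam A B K i) *v u) \<bullet> (V i *v (transpose (Gam A B K i) *v v))))"
  by (simp add: Top_def matrix_vector_mult_sum_left matrix_vector_mult_scaleR_left inner_sum_right inner_congr')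

lemma axis_entry: "axis a 1 \<bullet> (M *v axis b 1) = (M::real^'n^'m) $ a $ b"
  by (simp add: inner_axis' matrix_vector_mul_component inner_axis)

locale stab =
  fixes A :: "'s::finite \<Rightarrow> real^'d::finite^'d" and B :: "'s \<Rightarrow> real^'k::finite^'d"
    and p :: "'s \<Rightarrow> 's \<Rightarrow> real" and K :: "'s \<Rightarrow> real^'d^'k" and c \<rho> :: real
  assumes p_nonneg: "\<And>i j. 0 \<le> p i j" and c0: "0 \<le> c" and r0: "0 \<le> \<rho>" and r1: "\<rho> < 1"
    and geom: "\<And>t j x. qf ((Top A B p K ^^ t) (\<lambda>i. mat 1) j) x \<le> c * \<rho> ^ t * (norm x)\<^sup>2"
begin

abbreviation "T \<equiv> Top A B p K"
abbreviation "L \<equiv> Lop A B p K"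

lemma good_Top: "good S V \<Longrightarrow> good (T S) (T V)"
  unfolding good_def
proof (intro allI)
  fix j u v assume g: "\<forall>j u v. \<bar>2 * (u \<bullet> (V j *v v))\<bar> \<le> qf (S j) u + qf (S j) v"
  let ?G = "\<lambda>i. transpose (Gam A B K i)"
  have "\<bar>2 * (u \<bullet> (T V j *v v))\<bar> = \<bar>\<Sum>i\<in>UNIV. p i j * (2 * ((?G i *v u) \<bullet> (V i *v (?G i *v v))))\<bar>"
    by (simp add: inner_Top sum_distrib_left mult_ac)
  also have "\<dots> \<le> (\<Sum>i\<in>UNIV. \<bar>p i j * (2 * ((?G i *v u) \<bullet> (V i *v (?G i *v v))))\<bar>)"
    by (rule sum_abs)
  also have "\<dots> \<le> (\<Sum>i\<in>UNIV. p i j * (qf (S i) (?G i *v u) + qf (S i) (?G i *v v)))"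
    using g p_nonneg by (intro sum_mono) (simp add: abs_mult mult_left_mono)
  also have "\<dots> = qf (T S j) u + qf (T S j) v"
    by (simp add: qf_Top sum.distrib algebra_simps)
  finally show "\<bar>2 * (u \<bullet> (T V j *v v))\<bar> \<le> qf (T S j) u + qf (T S j) v" .
qed

lemma good_Topn: "good S V \<Longrightarrow> good ((T ^^ n) S) ((T ^^ n) V)"
  by (induction n) (simp_all add: good_Top)

lemma good_init:
  assumes "\<And>j. spec_norm (V j) \<le> s"
  shows "good (\<lambda>i. s *\<^sub>R mat 1) V"
  unfolding good_def
proof (intro allI)
  fix j u v
  have "\<bar>2 * (u \<bullet> (V j *v v))\<bar> \<le> 2 * (norm u * norm (V j *v v))"
    using Cauchy_Schwarz_ineq2[of u "V j *v v"] by (simp add: abs_mult)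
  also have "\<dots> \<le> 2 * (norm u * (s * norm v))"
  proof -
    have "norm (V j *v v) \<le> spec_norm (V j) * norm v" by (rule spec_bound)
    also have "\<dots> \<le> s * norm v" using assms[of j] by (intro mult_right_mono) auto
    finally have "norm (V j *v v) \<le> s * norm v" .
    then show ?thesis by (simp add: mult_left_mono)
  qed
  also have "\<dots> \<le> s * ((norm u)\<^sup>2 + (norm v)\<^sup>2)"
  proof -
    have s0: "0 \<le> s" using assms[of j] spec_norm_nonneg[of "V j"] by simp
    have "0 \<le> (norm u - norm v)\<^sup>2" by simp
    then have "2 * (norm u * norm v) \<le> (norm u)\<^sup>2 + (norm v)\<^sup>2"
      by (simp add: power2_eq_square algebra_simps)
    then have "s * (2 * (norm u * norm v)) \<le> s * ((norm u)\<^sup>2 + (norm v)\<^sup>2)"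
      using s0 by (rule mult_left_mono)
    then show ?thesis by (simp add: mult_ac)
  qed
  also have "\<dots> = qf (s *\<^sub>R mat 1) u + qf (s *\<^sub>R mat 1) v" by (simp add: qf_scaleR qf_mat algebra_simps)
  finally show "\<bar>2 * (u \<bullet> (V j *v v))\<bar> \<le> qf (s *\<^sub>R mat 1) u + qf (s *\<^sub>R mat 1) v" .
qed

lemma entries_bound:
  "\<bar>(T ^^ t) V j $ a $ b\<bar> \<le> (\<Sum>i\<in>UNIV. spec_norm (V i)) * c * \<rho> ^ t"
proof -
  define s where "s = (\<Sum>i\<in>UNIV. spec_norm (V i))"
  have s0: "0 \<le> s" by (simp add: s_def sum_nonneg spec_norm_nonneg)
  have "good (\<lambda>i. s *\<^sub>R mat 1) V"
    by (rule good_init) (auto simp: s_def intro!: member_le_sum spec_norm_nonneg)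
  then have g: "good ((T ^^ t) (\<lambda>i. s *\<^sub>R mat 1)) ((T ^^ t) V)" by (rule good_Topn)
  have "\<bar>2 * (axis a 1 \<bullet> ((T ^^ t) V j *v axis b 1))\<bar> \<le>
      qf ((T ^^ t) (\<lambda>i. s *\<^sub>R mat 1) j) (axis a 1) + qf ((T ^^ t) (\<lambda>i. s *\<^sub>R mat 1) j) (axis b 1)"
    using g unfolding good_def by blast
  also have "\<dots> = s * qf ((T ^^ t) (\<lambda>i. mat 1) j) (axis a 1) + s * qf ((T ^^ t) (\<lambda>i. mat 1) j) (axis b 1)"
    by (simp add: Topn_scale qf_scaleR)
  also have "\<dots> \<le> s * (c * \<rho> ^ t) + s * (c * \<rho> ^ t)"
    using geom[of t j "axis a 1"] geom[of t j "axis b 1"] s0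
    by (intro add_mono mult_left_mono) (auto simp: norm_axis_1)
  finally show ?thesis by (simp add: axis_entry s_def mult_ac)
qed

lemma Topn_summable: "summable (\<lambda>t. (T ^^ t) V j)"
  by (rule summable_mat_geom[where C="(\<Sum>i\<in>UNIV. spec_norm (V i)) * c", OF _ r0 r1]) (rule entries_bound)

lemma ip_Topn_bound: "\<bar>ip M ((T ^^ t) V)\<bar> \<le> (\<Sum>i\<in>UNIV. \<Sum>a\<in>UNIV. \<Sum>b\<in>UNIV. \<bar>M i $ a $ b\<bar>) *
      ((\<Sum>i\<in>UNIV. spec_norm (V i)) * c * \<rho> ^ t)"
  by (rule ip_bound) (rule entries_bound)

lemma ip_Topn_summable: "summable (\<lambda>t. ip M ((T ^^ t) V))"
  by (rule summable_real_geom[where C="(\<Sum>i\<in>UNIV. \<Sum>a\<in>UNIV. \<Sum>b\<in>UNIV. \<bar>M i $ a $ b\<bar>) *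
      ((\<Sum>i\<in>UNIV. spec_norm (V i)) * c)", OF _ r0 r1])
    (rule order_trans[OF ip_Topn_bound], simp add: mult_ac)

lemma Lopn_entry: "(L ^^ t) M i $ b $ a = ip M ((T ^^ t) (Eb i a b))"
  by (simp add: ip_Topn ip_Eb)

lemma Lopn_entries: "\<bar>(L ^^ t) M i $ b $ a\<bar> \<le> (\<Sum>i\<in>UNIV. \<Sum>a\<in>UNIV. \<Sum>b\<in>UNIV. \<bar>M i $ a $ b\<bar>) * c * \<rho> ^ t"
proof -
  have "\<bar>(L ^^ t) M i $ b $ a\<bar> \<le> (\<Sum>i\<in>UNIV. \<Sum>a\<in>UNIV. \<Sum>b\<in>UNIV. \<bar>M i $ a $ b\<bar>) *
      ((\<Sum>j\<in>UNIV. spec_norm (Eb i a b j)) * c * \<rho> ^ t)"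
    unfolding Lopn_entry by (rule ip_Topn_bound)
  also have "\<dots> \<le> (\<Sum>i\<in>UNIV. \<Sum>a\<in>UNIV. \<Sum>b\<in>UNIV. \<bar>M i $ a $ b\<bar>) * (1 * c * \<rho> ^ t)"
    using spec_sum_Eb[of i a b] c0 r0
    by (intro mult_left_mono mult_right_mono) (auto intro!: sum_nonneg)
  finally show ?thesis by (simp add: mult_ac)
qed

lemma Lopn_summable: "summable (\<lambda>t. (L ^^ t) M i)"
  by (rule summable_mat_geom[where C="(\<Sum>i\<in>UNIV. \<Sum>a\<in>UNIV. \<Sum>b\<in>UNIV. \<bar>M i $ a $ b\<bar>) * c", OF _ r0 r1])
    (rule Lopn_entries)

lemma Lop_fix_zero:
  assumes "\<And>i. D i = L D i"
  shows "D i = 0"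
proof -
  have D: "L D = D" using assms by (simp add: fun_eq_iff)
  have Dn: "(L ^^ t) D = D" for t by (induction t) (simp_all add: D)
  have "D i $ b $ a = 0" for a b
  proof (rule entry_to_zero[OF _ r0 r1])
    fix t
    show "\<bar>D i $ b $ a\<bar> \<le> (\<Sum>i\<in>UNIV. \<Sum>a\<in>UNIV. \<Sum>b\<in>UNIV. \<bar>D i $ a $ b\<bar>) * c * \<rho> ^ t"
      using Lopn_entries[of t D i b a] by (simp add: Dn)
  qed
  then show ?thesis by (simp add: vec_eq_iff)
qed

end


definition Psum where "Psum A B p K M = (\<lambda>i. \<Sum>t. (Lop A B p K ^^ t) M i)"
definition Vsum where "Vsum A B p K V = (\<lambda>i. \<Sum>t. (Top A B p K ^^ t) V i)"

lemma sum_suminf_swap: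
  fixes g :: "'s::finite \<Rightarrow> nat \<Rightarrow> 'a::real_normed_vector"
  assumes "\<And>i. summable (\<lambda>t. g i t)"
  shows "(\<Sum>i\<in>(UNIV::'s set). \<Sum>t. g i t) = (\<Sum>t. \<Sum>i\<in>UNIV. g i t)"
  using suminf_sum[of UNIV g] assms by simp

context stab
begin

lemma Top_suminf:
  assumes "\<And>i. summable (\<lambda>t. F t i)"
  shows "T (\<lambda>i. \<Sum>t. F t i) j = (\<Sum>t. T (F t) j)"
proof -
  let ?G = "Gam A B K"
  have "T (\<lambda>i. \<Sum>t. F t i) j = (\<Sum>i\<in>UNIV. p i j *\<^sub>R (?G i ** (\<Sum>t. F t i) ** transpose (?G i)))"
    by (simp add: Top_def)
  also have "\<dots> = (\<Sum>i\<in>UNIV. \<Sum>t. p i j *\<^sub>R (?G i ** F t i ** transpose (?G i)))"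
  proof (rule sum.cong[OF refl])
    fix i
    have "?G i ** (\<Sum>t. F t i) ** transpose (?G i) = (\<Sum>t. ?G i ** F t i ** transpose (?G i))"
      by (rule bounded_linear.suminf[OF bl_congr assms])
    moreover have "summable (\<lambda>t. ?G i ** F t i ** transpose (?G i))"
      by (rule bounded_linear.summable[OF bl_congr assms])
    ultimately show "p i j *\<^sub>R (?G i ** (\<Sum>t. F t i) ** transpose (?G i)) =
        (\<Sum>t. p i j *\<^sub>R (?G i ** F t i ** transpose (?G i)))"
      using bounded_linear.suminf[OF bounded_linear_scaleR_right] by metis
  qed
  also have "\<dots> = (\<Sum>t. \<Sum>i\<in>UNIV. p i j *\<^sub>R (?G i ** F t i ** transpose (?G i)))"
    by (rule sum_suminf_swap)
      (intro bounded_linear.summable[OF bounded_linear_scaleR_right] bounded_linear.summable[OF bl_congr] assms)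
  also have "\<dots> = (\<Sum>t. T (F t) j)" by (simp add: Top_def)
  finally show ?thesis .
qed

lemma Lop_suminf:
  assumes "\<And>i. summable (\<lambda>t. F t i)"
  shows "L (\<lambda>i. \<Sum>t. F t i) j = (\<Sum>t. L (F t) j)"
proof -
  let ?G = "Gam A B K"
  have e: "Eop p (\<lambda>i. \<Sum>t. F t i) j = (\<Sum>t. Eop p (F t) j)"
  proof -
    have "Eop p (\<lambda>i. \<Sum>t. F t i) j = (\<Sum>i\<in>UNIV. \<Sum>t. p j i *\<^sub>R F t i)"
      unfolding Eop_def
      by (rule sum.cong[OF refl]) (rule bounded_linear.suminf[OF bounded_linear_scaleR_right assms])
    also have "\<dots> = (\<Sum>t. \<Sum>i\<in>UNIV. p j i *\<^sub>R F t i)"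
      by (rule sum_suminf_swap) (intro bounded_linear.summable[OF bounded_linear_scaleR_right] assms)
    finally show ?thesis by (simp add: Eop_def)
  qed
  have s: "summable (\<lambda>t. Eop p (F t) j)"
    unfolding Eop_def by (intro summable_sum bounded_linear.summable[OF bounded_linear_scaleR_right] assms)
  have "L (\<lambda>i. \<Sum>t. F t i) j = transpose (?G j) ** (\<Sum>t. Eop p (F t) j) ** ?G j"
    by (simp add: Lop_def e)
  also have "\<dots> = (\<Sum>t. transpose (?G j) ** Eop p (F t) j ** ?G j)"
    by (rule bounded_linear.suminf[OF bl_congr s])
  finally show ?thesis by (simp add: Lop_def)
qed

lemma Psum_fix: "Psum A B p K M i = M i + L (Psum A B p K M) i"
proof -
  have "L (Psum A B p K M) i = (\<Sum>t. L ((L ^^ t) M) i)"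
    unfolding Psum_def by (rule Lop_suminf) (rule Lopn_summable)
  also have "\<dots> = (\<Sum>t. (L ^^ Suc t) M i)" by simp
  also have "\<dots> = Psum A B p K M i - M i"
    unfolding Psum_def using suminf_split_head[OF Lopn_summable[of M i]] by simp
  finally show ?thesis by simp
qed

lemma Vsum_fix: "T (Vsum A B p K V) j = Vsum A B p K V j - V j"
proof -
  have "T (Vsum A B p K V) j = (\<Sum>t. T ((T ^^ t) V) j)"
    unfolding Vsum_def by (rule Top_suminf) (rule Topn_summable)
  also have "\<dots> = (\<Sum>t. (T ^^ Suc t) V j)" by simp
  also have "\<dots> = Vsum A B p K V j - V j"
    unfolding Vsum_def using suminf_split_head[OF Topn_summable[of V j]] by simp
  finally show ?thesis .
qed

lemma Pmat_eq: "Pmat A B p Q R K = Psum A B p K (QK Q R K)"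
  unfolding Pmat_def
proof (rule the_equality)
  let ?P = "Psum A B p K (QK Q R K)"
  show "\<forall>i. ?P i = Q i + transpose (K i) ** R i ** K i + transpose (Gam A B K i) ** Eop p ?P i ** Gam A B K i"
    using Psum_fix[of "QK Q R K"] by (simp add: QK_def Lop_def)
  fix P assume h: "\<forall>i. P i = Q i + transpose (K i) ** R i ** K i + transpose (Gam A B K i) ** Eop p P i ** Gam A B K i"
  then have hP: "P i = QK Q R K i + L P i" for i by (simp add: QK_def Lop_def)
  define D where "D = (\<lambda>i. P i - ?P i)"
  have "D i = L D i" for i
  proof -
    have "D i = (QK Q R K i + L P i) - (QK Q R K i + L ?P i)"
      using hP[of i] Psum_fix[of "QK Q R K" i] by (simp add: D_def)
    also have "\<dots> = L D i" by (simp add: D_def Lop_diff)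
    finally show ?thesis .
  qed
  then have "D i = 0" for i by (rule Lop_fix_zero)
  then show "P = ?P" by (simp add: D_def fun_eq_iff)
qed

lemma Psum_psd: "psdT M \<Longrightarrow> psdT (Psum A B p K M)"
  unfolding psdT_def Psum_def
  by (auto intro!: psd_suminf Lopn_summable Lopn_psd[OF p_nonneg, unfolded psdT_def, rule_format])

lemma Vsum_psd: "psdT V \<Longrightarrow> psdT (Vsum A B p K V)"
  unfolding psdT_def Vsum_def
  by (auto intro!: psd_suminf Topn_summable Topn_psd[OF p_nonneg, unfolded psdT_def, rule_format])

lemma Psum_ge: "psdT M \<Longrightarrow> qf (M i) x \<le> qf (Psum A B p K M i) x"
proof -
  assume M: "psdT M"
  have "psdT (L (Psum A B p K M))" by (rule Lop_psd[OF p_nonneg Psum_psd[OF M]])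
  then have "0 \<le> qf (L (Psum A B p K M) i) x" unfolding psdT_def by (simp add: psd_qf)
  then show ?thesis by (subst Psum_fix) (simp add: qf_add)
qed

lemma Vsum_ge: "psdT V \<Longrightarrow> qf (V i) x \<le> qf (Vsum A B p K V i) x"
proof -
  assume M: "psdT V"
  have "psdT (T (Vsum A B p K V))" by (rule Top_psd[OF p_nonneg Vsum_psd[OF M]])
  then have "0 \<le> qf (T (Vsum A B p K V) i) x" unfolding psdT_def by (simp add: psd_qf)
  then show ?thesis using Vsum_fix[of V i] by (simp add: qf_diff)
qed

lemma cost_eq: "cost A B p \<pi> \<Sigma> Q R K = ip (Psum A B p K (QK Q R K)) (X0 \<pi> \<Sigma>)"
proof -
  let ?M = "QK Q R K" and ?X = "X0 \<pi> \<Sigma>"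
  have "cost A B p \<pi> \<Sigma> Q R K = (\<Sum>t. ip ?M ((T ^^ t) ?X))"
    by (simp add: cost_def ip_def QK_def state_cov_def)
  also have "\<dots> = (\<Sum>t. ip ((L ^^ t) ?M) ?X)" by (simp only: ip_Topn)
  also have "\<dots> = (\<Sum>t. \<Sum>i\<in>UNIV. trace ((L ^^ t) ?M i ** ?X i))"
    by (simp only: ip_def)
  also have "\<dots> = (\<Sum>i\<in>UNIV. \<Sum>t. trace ((L ^^ t) ?M i ** ?X i))"
    by (rule sum_suminf_swap[symmetric]) (rule bounded_linear.summable[OF bl_trace_left Lopn_summable])
  also have "\<dots> = ip (Psum A B p K ?M) ?X"
    unfolding Psum_def
    by (simp add: ip_def bounded_linear.suminf[OF bl_trace_left Lopn_summable])
  finally show ?thesis .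
qed

lemma Xmat_eq: "Xmat A B p \<pi> \<Sigma> K = Vsum A B p K (X0 \<pi> \<Sigma>)"
  by (simp add: Xmat_def Vsum_def state_cov_def fun_eq_iff)

lemma cost_Xmat: "cost A B p \<pi> \<Sigma> Q R K = ip (QK Q R K) (Xmat A B p \<pi> \<Sigma> K)"
proof -
  let ?M = "QK Q R K" and ?X = "X0 \<pi> \<Sigma>"
  have "cost A B p \<pi> \<Sigma> Q R K = (\<Sum>t. \<Sum>i\<in>UNIV. trace (?M i ** (T ^^ t) ?X i))"
    by (simp add: cost_def QK_def state_cov_def)
  also have "\<dots> = (\<Sum>i\<in>UNIV. \<Sum>t. trace (?M i ** (T ^^ t) ?X i))"
    by (rule sum_suminf_swap[symmetric]) (rule bounded_linear.summable[OF bl_trace_right Topn_summable])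
  also have "\<dots> = ip ?M (Xmat A B p \<pi> \<Sigma> K)"
    by (simp add: Xmat_eq Vsum_def ip_def bounded_linear.suminf[OF bl_trace_right Topn_summable])
  finally show ?thesis .
qed

end

lemma ms_stable_stab:
  fixes A :: "'s::finite \<Rightarrow> real^'d::finite^'d" and B :: "'s \<Rightarrow> real^'k::finite^'d" and K :: "'s \<Rightarrow> real^'d^'k"
  assumes "\<And>i j. 0 \<le> p i j" "ms_stable A B p K"
  shows "\<exists>c \<rho>. stab A B p K c \<rho>"
  using stable_geom[OF assms] assms(1) unfolding stab_def by blast


lemma qf_plus':
  assumes "transpose (S::real^'n^'n) = S"
  shows "qf S (x + y) - qf S x = 2 * (y \<bullet> (S *v x)) + qf S y"
  using qf_plus[OF assms] by simp

lemma core_identity: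
  fixes R :: "real^'k^'k" and E :: "real^'d^'d" and B :: "real^'k^'d"
  assumes sR: "transpose R = R" and sE: "transpose E = E"
  shows "qf R (y + d) - qf R y + (qf E (g - B *v d) - qf E g) =
     2 * (d \<bullet> (R *v y - transpose B *v (E *v g))) + (qf R d + qf E (B *v d))"
proof -
  have 1: "qf R (y + d) - qf R y = 2 * (d \<bullet> (R *v y)) + qf R d" by (rule qf_plus'[OF sR])
  have "g - B *v d = g + (-1) *\<^sub>R (B *v d)" by simp
  then have "qf E (g - B *v d) - qf E g = 2 * (((-1) *\<^sub>R (B *v d)) \<bullet> (E *v g)) + qf E ((-1) *\<^sub>R (B *v d))"
    using qf_plus'[OF sE, of g "(-1) *\<^sub>R (B *v d)"] by simp
  also have "\<dots> = - 2 * ((B *v d) \<bullet> (E *v g)) + qf E (B *v d)"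
    using qf_smult[of E "-1" "B *v d"] by (simp only: inner_scaleR_left) simp
  finally have 2: "qf E (g - B *v d) - qf E g = - 2 * ((B *v d) \<bullet> (E *v g)) + qf E (B *v d)" .
  have 3: "d \<bullet> (transpose B *v (E *v g)) = (B *v d) \<bullet> (E *v g)"
    by (subst dot_transpose) simp
  show ?thesis using 1 2 3 by (simp add: inner_diff_right algebra_simps)
qed

lemma qf_tt: "qf (transpose L ** L) x = (norm ((L::real^'n^'m) *v x))\<^sup>2"
  using qf_congr[of L "mat 1" x] by (simp add: qf_mat)

lemma gd_pointwise:
  fixes d l :: "real^'n"
  assumes "0 < r" "r * (norm d)\<^sup>2 \<le> q"
  shows "- (norm l)\<^sup>2 / r \<le> 2 * (d \<bullet> l) + q"
proof -
  have "0 \<le> (norm (r *\<^sub>R d + l))\<^sup>2" by simp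
  also have "(norm (r *\<^sub>R d + l))\<^sup>2 = r\<^sup>2 * (norm d)\<^sup>2 + 2 * r * (d \<bullet> l) + (norm l)\<^sup>2"
  proof -
    have "(norm (r *\<^sub>R d + l))\<^sup>2 = (r *\<^sub>R d + l) \<bullet> (r *\<^sub>R d + l)" by (simp only: power2_norm_eq_inner)
    also have "\<dots> = r\<^sup>2 * (d \<bullet> d) + 2 * r * (d \<bullet> l) + l \<bullet> l"
      by (simp add: inner_add_left inner_add_right inner_commute power2_eq_square algebra_simps)
    finally show ?thesis by (simp add: power2_norm_eq_inner)
  qed
  finally have "0 \<le> r * (r * (norm d)\<^sup>2 + 2 * (d \<bullet> l)) + (norm l)\<^sup>2" by (simp add: power2_eq_square algebra_simps)
  then have "0 \<le> r * (q + 2 * (d \<bullet> l)) + (norm l)\<^sup>2"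
    using assms by (smt (verit) mult_left_mono)
  then show ?thesis using assms(1) by (simp add: field_simps)
qed


lemma ip_add_left: "ip (\<lambda>i. P i + P' i) X = ip P X + ip P' X"
  by (simp add: ip_def matrix_add_rdistrib trace_add sum.distrib)

lemma ip_diff_left: "ip (\<lambda>i. P i - P' i) X = ip P X - ip P' X"
  by (simp add: ip_def matrix_diff_rdistrib trace_sub sum_subtractf)

lemma ip_diff_right: "ip P (\<lambda>i. X i - X' i) = ip P X - ip P X'"
  by (simp add: ip_def matrix_diff_ldistrib trace_sub sum_subtractf)

lemma Gam_mult: "Gam A B K i *v x = A i *v x - B i *v (K i *v x)"
  by (simp add: Gam_def matrix_vector_mult_diff_rdistrib matrix_vector_mul_assoc)

lemma finite_range_Min_in: "Min (range (f::'s::finite \<Rightarrow> real)) \<in> range f"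
  by (rule Min_in) auto

lemma Min_range_le: "Min (range (f::'s::finite \<Rightarrow> real)) \<le> f i"
  by (rule Min_le) auto

lemma Max_range_ge: "f i \<le> Max (range (f::'s::finite \<Rightarrow> real))"
  by (rule Max_ge) auto

locale npg =
  fixes A :: "'s::finite \<Rightarrow> real^'d::finite^'d"
    and B :: "'s \<Rightarrow> real^'k::finite^'d"
    and p :: "'s \<Rightarrow> 's \<Rightarrow> real"
    and \<pi> :: "'s \<Rightarrow> real"
    and \<Sigma> :: "real^'d^'d"
    and Q :: "'s \<Rightarrow> real^'d^'d"
    and R :: "'s \<Rightarrow> real^'k^'k"
  assumes p_nonneg: "\<And>i j. 0 \<le> p i j"
    and p_stoch: "\<And>i. (\<Sum>j\<in>UNIV. p i j) = 1"
    and pi_pos: "\<And>i. 0 < \<pi> i"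
    and Sigma_pd: "pd_mat \<Sigma>"
    and Q_pd: "\<And>i. pd_mat (Q i)"
    and R_pd: "\<And>i. pd_mat (R i)"
begin

abbreviation "C K \<equiv> cost A B p \<pi> \<Sigma> Q R K"
abbreviation "Pm K \<equiv> Pmat A B p Q R K"
abbreviation "Em K i \<equiv> Eop p (Pm K) i"
abbreviation "Mm K i \<equiv> R i + transpose (B i) ** Em K i ** B i"
abbreviation "Lg K i \<equiv> Lmat A B p Q R K i"
abbreviation "\<mu> \<equiv> mu \<pi> \<Sigma>"
abbreviation "X0' \<equiv> X0 \<pi> \<Sigma>"

lemma X0_psd: "psdT X0'"
  unfolding psdT_def X0_def using pi_pos by (auto intro!: psd_scaleR[OF pd_psd[OF Sigma_pd]] less_imp_le)

lemma sigma_pos: "0 < sigma_min \<Sigma>" by (rule pd_sigma_min_pos[OF Sigma_pd])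

lemma mu_pos: "0 < \<mu>"
proof -
  have "Min (range (\<lambda>i. \<pi> i * sigma_min \<Sigma>)) \<in> range (\<lambda>i. \<pi> i * sigma_min \<Sigma>)"
    by (rule finite_range_Min_in)
  then obtain i where "Min (range (\<lambda>i. \<pi> i * sigma_min \<Sigma>)) = \<pi> i * sigma_min \<Sigma>" by blast
  then have "\<mu> = \<pi> i * sigma_min \<Sigma>" by (simp add: mu_def)
  then show ?thesis using pi_pos[of i] sigma_pos by simp
qed

lemma mu_le: "\<mu> \<le> \<pi> i * sigma_min \<Sigma>"
  unfolding mu_def by (rule Min_range_le)

lemma X0_qf: "\<mu> * (norm x)\<^sup>2 \<le> qf (X0' i) x"
proof -
  have "\<mu> * (norm x)\<^sup>2 \<le> \<pi> i * sigma_min \<Sigma> * (norm x)\<^sup>2" by (intro mult_right_mono mu_le) auto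
  also have "\<dots> \<le> \<pi> i * qf \<Sigma> x"
    using psd_sigma_min_qf[OF pd_psd[OF Sigma_pd], of x] pi_pos[of i]
    by (simp add: mult.assoc mult_left_mono)
  finally show ?thesis by (simp add: X0_def qf_scaleR)
qed

lemma QK_psd: "psdT (QK Q R K)"
  unfolding psdT_def QK_def by (auto intro!: psd_add[OF pd_psd[OF Q_pd]] psd_congr[OF pd_psd[OF R_pd]])

lemma QK_qf: "qf (QK Q R K i) x = qf (Q i) x + qf (R i) (K i *v x)"
  by (simp add: QK_def qf_add qf_congr)

lemma R_sym: "transpose (R i) = R i" using R_pd[of i] by (simp add: pd_mat_def)

context
  fixes K :: "'s \<Rightarrow> real^'d^'k"
  assumes st: "ms_stable A B p K"
begin

lemma stabK: "\<exists>c \<rho>. stab A B p K c \<rho>" by (rule ms_stable_stab[OF p_nonneg st])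

lemma Pm_eq: "Pm K = Psum A B p K (QK Q R K)"
  using stabK stab.Pmat_eq by blast

lemma Pm_psd: "psdT (Pm K)"
  using stabK stab.Psum_psd[OF _ QK_psd] Pm_eq by metis

lemma Pm_fix: "Pm K i = QK Q R K i + Lop A B p K (Pm K) i"
  using stabK stab.Psum_fix Pm_eq by metis

lemma Pm_ge_Q: "qf (Q i) x \<le> qf (Pm K i) x"
proof -
  have "qf (QK Q R K i) x \<le> qf (Pm K i) x"
    using stabK stab.Psum_ge[OF _ QK_psd] Pm_eq by metis
  moreover have "0 \<le> qf (R i) (K i *v x)" by (rule psd_qf[OF pd_psd[OF R_pd]])
  ultimately show ?thesis by (simp add: QK_qf)
qed

lemma cost_P: "C K = ip (Pm K) X0'"
  using stabK stab.cost_eq Pm_eq by metis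

lemma cost_X: "C K = ip (QK Q R K) (Xmat A B p \<pi> \<Sigma> K)"
  using stabK stab.cost_Xmat by metis

lemma X_psd: "psdT (Xmat A B p \<pi> \<Sigma> K)"
  using stabK stab.Vsum_psd[OF _ X0_psd] stab.Xmat_eq by metis

lemma X_ge: "qf (X0' i) x \<le> qf (Xmat A B p \<pi> \<Sigma> K i) x"
  using stabK stab.Vsum_ge[OF _ X0_psd] stab.Xmat_eq by metis

lemma X_qf: "\<mu> * (norm x)\<^sup>2 \<le> qf (Xmat A B p \<pi> \<Sigma> K i) x"
  using X0_qf[of x i] X_ge[of i x] by simp

lemma X_fix: "Top A B p K (Xmat A B p \<pi> \<Sigma> K) j = Xmat A B p \<pi> \<Sigma> K j - X0' j"
  using stabK stab.Vsum_fix stab.Xmat_eq by metis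

lemma cost_nonneg: "0 \<le> C K"
  unfolding cost_P by (rule ip_psd_nonneg[OF Pm_psd X0_psd])

lemma E_sym: "transpose (Em K i) = Em K i"
  using Pm_psd by (simp add: Eop_def transpose_sum transpose_scalar psdT_def psd_mat_def)

lemma E_psd: "psd_mat (Em K i)"
  using Pm_psd p_nonneg by (auto simp: Eop_def psdT_def intro!: psd_sum psd_scaleR)

lemma spec_P_le: "spec_norm (Pm K j) \<le> C K / \<mu>"
proof -
  have trP: "0 \<le> trace (Pm K i)" for i using Pm_psd by (simp add: psdT_def trace_psd_ge0)
  have eq: "C K = (\<Sum>i\<in>UNIV. \<pi> i * trace (Pm K i ** \<Sigma>))"
    unfolding cost_P ip_def X0_def by (simp only: matrix_scaleR_right trace_scaleR)
  have ge: "\<mu> * trace (Pm K i) \<le> \<pi> i * trace (Pm K i ** \<Sigma>)" for i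
  proof -
    have psdP: "psd_mat (Pm K i)" using Pm_psd by (simp add: psdT_def)
    have "sigma_min \<Sigma> * trace (Pm K i) \<le> trace (\<Sigma> ** Pm K i)"
      by (rule trace_psd_lower[OF psdP psd_sigma_min_qf[OF pd_psd[OF Sigma_pd]]])
    also have "\<dots> = trace (Pm K i ** \<Sigma>)" by (rule trace_mul_sym)
    finally have "\<pi> i * (sigma_min \<Sigma> * trace (Pm K i)) \<le> \<pi> i * trace (Pm K i ** \<Sigma>)"
      using pi_pos[of i] by (intro mult_left_mono) auto
    moreover have "\<mu> * trace (Pm K i) \<le> \<pi> i * sigma_min \<Sigma> * trace (Pm K i)"
      by (intro mult_right_mono mu_le trP)
    ultimately show ?thesis by (simp add: mult.assoc)
  qed
  have "\<mu> * trace (Pm K j) \<le> (\<Sum>i\<in>UNIV. \<mu> * trace (Pm K i))"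
    by (rule member_le_sum) (use mu_pos trP in auto)
  also have "\<dots> \<le> (\<Sum>i\<in>UNIV. \<pi> i * trace (Pm K i ** \<Sigma>))" by (rule sum_mono) (rule ge)
  also have "\<dots> = C K" by (rule eq[symmetric])
  finally have "\<mu> * trace (Pm K j) \<le> C K" .
  then have "trace (Pm K j) \<le> C K / \<mu>" using mu_pos by (simp add: field_simps)
  moreover have "spec_norm (Pm K j) \<le> trace (Pm K j)" using Pm_psd by (simp add: psdT_def spec_le_trace)
  ultimately show ?thesis by simp
qed

lemma spec_E_le: "spec_norm (Em K i) \<le> C K / \<mu>"
proof -
  have "spec_norm (Em K i) \<le> (\<Sum>j\<in>UNIV. spec_norm (p i j *\<^sub>R Pm K j))"
    unfolding Eop_def by (rule spec_norm_sum) simp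
  also have "\<dots> \<le> (\<Sum>j\<in>UNIV. p i j * (C K / \<mu>))"
  proof (rule sum_mono)
    fix j
    have "spec_norm (p i j *\<^sub>R Pm K j) \<le> \<bar>p i j\<bar> * spec_norm (Pm K j)" by (rule spec_norm_scaleR)
    also have "\<dots> \<le> p i j * (C K / \<mu>)" using p_nonneg[of i j] spec_P_le[of j]
      by (simp only: abs_of_nonneg) (rule mult_left_mono)
    finally show "spec_norm (p i j *\<^sub>R Pm K j) \<le> p i j * (C K / \<mu>)" .
  qed
  also have "\<dots> = (\<Sum>j\<in>UNIV. p i j) * (C K / \<mu>)" by (rule sum_distrib_right[symmetric])
  also have "\<dots> = C K / \<mu>" by (simp add: p_stoch)
  finally show ?thesis .
qed

lemma spec_M_le: "spec_norm (Mm K i) \<le> max_norm R + (max_norm B)\<^sup>2 * (C K / \<mu>)"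
proof -
  have b: "spec_norm (B i) \<le> max_norm B" unfolding max_norm_def by (rule Max_range_ge)
  have r: "spec_norm (R i) \<le> max_norm R" unfolding max_norm_def by (rule Max_range_ge)
  have CK: "0 \<le> C K / \<mu>" using cost_nonneg mu_pos by simp
  have "spec_norm (transpose (B i) ** Em K i ** B i) \<le> spec_norm (transpose (B i) ** Em K i) * spec_norm (B i)"
    by (rule spec_norm_mult)
  also have "\<dots> \<le> (spec_norm (transpose (B i)) * spec_norm (Em K i)) * spec_norm (B i)"
    by (intro mult_right_mono spec_norm_mult spec_norm_nonneg)
  also have "\<dots> \<le> (spec_norm (B i) * spec_norm (Em K i)) * spec_norm (B i)"
    by (intro mult_right_mono spec_norm_transpose spec_norm_nonneg)
  also have "\<dots> = (spec_norm (B i))\<^sup>2 * spec_norm (Em K i)" by (simp add: power2_eq_square)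
  also have "\<dots> \<le> (max_norm B)\<^sup>2 * (C K / \<mu>)"
    using b spec_E_le[of i] by (intro mult_mono power_mono spec_norm_nonneg) (auto intro: order_trans[OF spec_norm_nonneg])
  finally have "spec_norm (transpose (B i) ** Em K i ** B i) \<le> (max_norm B)\<^sup>2 * (C K / \<mu>)" .
  then show ?thesis using spec_norm_add[of "R i" "transpose (B i) ** Em K i ** B i"] r by simp
qed

lemma M_lower: "sigma_min (R i) * (norm x)\<^sup>2 \<le> qf (Mm K i) x"
proof -
  have "sigma_min (R i) * (norm x)\<^sup>2 \<le> qf (R i) x" by (rule psd_sigma_min_qf[OF pd_psd[OF R_pd]])
  moreover have "0 \<le> qf (Em K i) (B i *v x)" by (rule psd_qf[OF E_psd])
  ultimately show ?thesis by (simp add: qf_add qf_congr)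
qed

lemma Lg_mult: "Lg K i *v x = R i *v (K i *v x) - transpose (B i) *v (Em K i *v (Gam A B K i *v x))"
  by (simp add: Lmat_def Gam_mult matrix_vector_mult_diff_rdistrib matrix_vector_mult_add_rdistrib
      matrix_vector_mul_assoc[symmetric] matrix_vector_mult_diff_distrib)

lemma Z_qf:
  "qf (QK Q R K' i) x + qf (Lop A B p K' (Pm K) i) x - qf (Pm K i) x =
   2 * (((K' i - K i) *v x) \<bullet> (Lg K i *v x)) + qf (Mm K i) ((K' i - K i) *v x)"
proof -
  let ?y = "K i *v x" and ?d = "(K' i - K i) *v x" and ?g = "Gam A B K i *v x"
  have k': "K' i *v x = ?y + ?d" by (simp add: matrix_vector_mult_diff_rdistrib)
  have g': "Gam A B K' i *v x = ?g - B i *v ?d"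
    by (simp add: Gam_mult matrix_vector_mult_diff_rdistrib matrix_vector_mult_diff_distrib)
  have "qf (Pm K i) x = qf (Q i) x + qf (R i) ?y + qf (Em K i) ?g"
    by (subst Pm_fix) (simp add: QK_qf qf_add Lop_def qf_congr)
  moreover have "qf (QK Q R K' i) x + qf (Lop A B p K' (Pm K) i) x = qf (Q i) x + qf (R i) (?y + ?d) + qf (Em K i) (?g - B i *v ?d)"
    by (simp add: QK_qf Lop_def qf_congr k' g')
  ultimately have "qf (QK Q R K' i) x + qf (Lop A B p K' (Pm K) i) x - qf (Pm K i) x =
      qf (R i) (?y + ?d) - qf (R i) ?y + (qf (Em K i) (?g - B i *v ?d) - qf (Em K i) ?g)"
    by simp
  also have "\<dots> = 2 * (?d \<bullet> (R i *v ?y - transpose (B i) *v (Em K i *v ?g))) + (qf (R i) ?d + qf (Em K i) (B i *v ?d))"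
    by (rule core_identity[OF R_sym E_sym])
  also have "\<dots> = 2 * (?d \<bullet> (Lg K i *v x)) + qf (Mm K i) ?d"
    by (simp add: Lg_mult qf_add qf_congr)
  finally show ?thesis .
qed

end

end


lemma trace_mono_qf:
  assumes "psd_mat S" "\<And>x. qf Z x \<le> qf N x"
  shows "trace (Z ** S) \<le> trace (N ** S)"
proof -
  have "0 \<le> trace ((N - Z) ** S)"
    by (rule trace_psd_nonneg[OF assms(1)]) (use assms(2) in \<open>simp add: qf_diff\<close>)
  then show ?thesis by (simp add: matrix_diff_rdistrib trace_sub)
qed

context npg
begin

lemma cost_diff:
  assumes st: "ms_stable A B p K" and st': "ms_stable A B p K'"
  shows "C K' - C K = ip (\<lambda>i. QK Q R K' i + Lop A B p K' (Pm K) i - Pm K i) (Xmat A B p \<pi> \<Sigma> K')"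
proof -
  let ?X = "Xmat A B p \<pi> \<Sigma> K'"
  have "ip (\<lambda>i. QK Q R K' i + Lop A B p K' (Pm K) i - Pm K i) ?X
      = ip (QK Q R K') ?X + ip (Lop A B p K' (Pm K)) ?X - ip (Pm K) ?X"
    using ip_diff_left[of "\<lambda>i. QK Q R K' i + Lop A B p K' (Pm K) i" "Pm K" ?X]
      ip_add_left[of "QK Q R K'" "Lop A B p K' (Pm K)" ?X] by simp
  also have "ip (Lop A B p K' (Pm K)) ?X = ip (Pm K) ?X - ip (Pm K) X0'"
  proof -
    have "ip (Lop A B p K' (Pm K)) ?X = ip (Pm K) (Top A B p K' ?X)" by (rule ip_Top[symmetric])
    also have "Top A B p K' ?X = (\<lambda>j. ?X j - X0' j)" using X_fix[OF st'] by (simp add: fun_eq_iff)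
    finally show ?thesis by (simp add: ip_diff_right)
  qed
  finally show ?thesis using cost_X[OF st'] cost_P[OF st] by simp
qed

lemma Z_qf':
  assumes st: "ms_stable A B p K"
  shows "qf (QK Q R K' i + Lop A B p K' (Pm K) i - Pm K i) x =
   2 * (((K' i - K i) *v x) \<bullet> (Lg K i *v x)) + qf (Mm K i) ((K' i - K i) *v x)"
  using Z_qf[OF st] by (simp add: qf_add qf_diff)

lemma Lambda_R_pos: "0 < Lambda_min R"
proof -
  have "Min (range (\<lambda>i. sigma_min (R i))) \<in> range (\<lambda>i. sigma_min (R i))" by (rule finite_range_Min_in)
  then obtain i where "Min (range (\<lambda>i. sigma_min (R i))) = sigma_min (R i)" by blast
  then have "Lambda_min R = sigma_min (R i)" by (simp add: Lambda_min_def)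
  then show ?thesis using pd_sigma_min_pos[OF R_pd[of i]] by simp
qed

lemma Lambda_R_le: "Lambda_min R \<le> sigma_min (R i)"
  unfolding Lambda_min_def by (rule Min_range_le)

lemma Lambda_R_le_max: "Lambda_min R \<le> max_norm R"
proof -
  have "Lambda_min R \<le> sigma_min (R undefined)" by (rule Lambda_R_le)
  also have "\<dots> \<le> spec_norm (R undefined)" by (rule sigma_min_le_spec)
  also have "\<dots> \<le> max_norm R" unfolding max_norm_def by (rule Max_range_ge)
  finally show ?thesis .
qed

lemma mu_le_maxX:
  assumes st: "ms_stable A B p K"
  shows "\<mu> \<le> max_norm (Xmat A B p \<pi> \<Sigma> K)"
proof -
  let ?X = "Xmat A B p \<pi> \<Sigma> K" and ?e = "axis undefined 1 :: real^'d"
  have "\<mu> = \<mu> * (norm ?e)\<^sup>2" by (simp add: norm_axis_1)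
  also have "\<dots> \<le> qf (?X undefined) ?e" by (rule X_qf[OF st])
  also have "\<dots> \<le> spec_norm (?X undefined) * (norm ?e)\<^sup>2" by (rule qf_le_spec)
  also have "\<dots> = spec_norm (?X undefined)" by (simp add: norm_axis_1)
  also have "\<dots> \<le> max_norm ?X" unfolding max_norm_def by (rule Max_range_ge)
  finally show ?thesis .
qed

definition "Gn K = (\<Sum>i\<in>UNIV. trace (transpose (Lg K i) ** Lg K i))"

lemma Gn_nonneg: "0 \<le> Gn K"
  unfolding Gn_def by (intro sum_nonneg trace_psd_ge0 psd_ttt)

lemma grad_dom:
  assumes st: "ms_stable A B p K" and st': "ms_stable A B p K'"
  shows "C K - C K' \<le> max_norm (Xmat A B p \<pi> \<Sigma> K') / Lambda_min R * Gn K"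
proof -
  let ?X = "Xmat A B p \<pi> \<Sigma> K'" and ?r = "Lambda_min R"
  let ?Z = "\<lambda>i. QK Q R K' i + Lop A B p K' (Pm K) i - Pm K i"
  let ?N = "\<lambda>i. transpose (Lg K i) ** Lg K i"
  have r0: "0 < ?r" by (rule Lambda_R_pos)
  have Xpsd: "psd_mat (?X i)" for i using X_psd[OF st'] by (simp add: psdT_def)
  have each: "- (max_norm ?X / ?r) * trace (?N i) \<le> trace (?Z i ** ?X i)" for i
  proof -
    have "trace (((- 1 / ?r) *\<^sub>R ?N i) ** ?X i) \<le> trace (?Z i ** ?X i)"
    proof (rule trace_mono_qf[OF Xpsd])
      fix x
      let ?d = "(K' i - K i) *v x" and ?l = "Lg K i *v x"
      have "?r * (norm ?d)\<^sup>2 \<le> sigma_min (R i) * (norm ?d)\<^sup>2"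
        by (intro mult_right_mono Lambda_R_le) auto
      also have "\<dots> \<le> qf (Mm K i) ?d" by (rule M_lower[OF st])
      finally have "- (norm ?l)\<^sup>2 / ?r \<le> 2 * (?d \<bullet> ?l) + qf (Mm K i) ?d"
        by (rule gd_pointwise[OF r0])
      moreover have "qf (((- 1 / ?r) *\<^sub>R ?N i)) x = - (norm ?l)\<^sup>2 / ?r"
        by (simp only: qf_scaleR qf_tt) simp
      ultimately show "qf (((- 1 / ?r) *\<^sub>R ?N i)) x \<le> qf (?Z i) x"
        by (simp only: Z_qf'[OF st])
    qed
    moreover have "trace (?N i ** ?X i) \<le> max_norm ?X * trace (?N i)"
    proof -
      have "trace (?N i ** ?X i) = trace (?X i ** ?N i)" by (rule trace_mul_sym)
      also have "\<dots> \<le> spec_norm (?X i) * trace (?N i)"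
        by (rule trace_psd_upper[OF psd_ttt qf_le_spec])
      also have "\<dots> \<le> max_norm ?X * trace (?N i)"
        by (intro mult_right_mono trace_psd_ge0 psd_ttt) (unfold max_norm_def, rule Max_range_ge)
      finally show ?thesis .
    qed
    moreover have "trace (((- 1 / ?r) *\<^sub>R ?N i) ** ?X i) = (- 1 / ?r) * trace (?N i ** ?X i)"
      by (simp only: matrix_scaleR_left trace_scaleR)
    moreover have "(- 1 / ?r) * (max_norm ?X * trace (?N i)) \<le> (- 1 / ?r) * trace (?N i ** ?X i)"
      by (rule mult_left_mono_neg) (use calculation r0 in auto)
    ultimately show ?thesis by simp
  qed
  have "- (max_norm ?X / ?r) * Gn K \<le> ip ?Z ?X"
    unfolding Gn_def ip_def sum_distrib_left by (rule sum_mono) (rule each)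
  also have "\<dots> = C K' - C K" by (rule cost_diff[OF st st', symmetric])
  finally show ?thesis by simp
qed

end


context npg
begin

lemma Lambda_Q_pos: "0 < Lambda_min Q"
proof -
  have "Min (range (\<lambda>i. sigma_min (Q i))) \<in> range (\<lambda>i. sigma_min (Q i))" by (rule finite_range_Min_in)
  then obtain i where "Min (range (\<lambda>i. sigma_min (Q i))) = sigma_min (Q i)" by blast
  then have "Lambda_min Q = sigma_min (Q i)" by (simp add: Lambda_min_def)
  then show ?thesis using pd_sigma_min_pos[OF Q_pd[of i]] by simp
qed

lemma Q_lower: "Lambda_min Q * (norm x)\<^sup>2 \<le> qf (Q i) x"
proof -
  have "Lambda_min Q \<le> sigma_min (Q i)" unfolding Lambda_min_def by (rule Min_range_le)
  then have "Lambda_min Q * (norm x)\<^sup>2 \<le> sigma_min (Q i) * (norm x)\<^sup>2" by (intro mult_right_mono) auto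
  also have "\<dots> \<le> qf (Q i) x" by (rule psd_sigma_min_qf[OF pd_psd[OF Q_pd]])
  finally show ?thesis .
qed

context
  fixes K :: "'s \<Rightarrow> real^'d^'k" and \<eta> :: real
  assumes st: "ms_stable A B p K" and eta: "0 < \<eta>" and eM: "\<And>i. 2 * \<eta> * spec_norm (Mm K i) \<le> 1"
begin

definition "Kn = (\<lambda>i. K i - (2 * \<eta>) *\<^sub>R Lg K i)"

abbreviation "Zs i \<equiv> QK Q R Kn i + Lop A B p Kn (Pm K) i - Pm K i"
abbreviation "Ns i \<equiv> transpose (Lg K i) ** Lg K i"

lemma Z_bound: "qf (Zs i) x \<le> qf ((- 2 * \<eta>) *\<^sub>R Ns i) x"
proof -
  let ?l = "Lg K i *v x"
  let ?n = "(norm ?l)\<^sup>2" and ?s = "spec_norm (Mm K i)"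
  have d: "(Kn i - K i) *v x = (- (2 * \<eta>)) *\<^sub>R ?l"
    by (simp add: Kn_def matrix_vector_mult_uminus_left matrix_vector_mult_scaleR_left)
  have e1: "2 * (((- (2 * \<eta>)) *\<^sub>R ?l) \<bullet> ?l) = - 4 * \<eta> * ?n"
    by (simp add: power2_norm_eq_inner)
  have e2: "qf (Mm K i) ((- (2 * \<eta>)) *\<^sub>R ?l) = (2 * \<eta>)\<^sup>2 * qf (Mm K i) ?l"
    by (simp only: qf_smult power2_minus)
  have b1: "qf (Mm K i) ?l \<le> ?s * ?n" by (rule qf_le_spec)
  have b2: "(2 * \<eta>)\<^sup>2 * qf (Mm K i) ?l \<le> (2 * \<eta>)\<^sup>2 * (?s * ?n)"
    using b1 by (rule mult_left_mono) simp
  have b3: "(2 * \<eta>)\<^sup>2 * (?s * ?n) = (2 * \<eta>) * ((2 * \<eta> * ?s) * ?n)"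
    by (simp add: power2_eq_square)
  have b4: "(2 * \<eta> * ?s) * ?n \<le> 1 * ?n"
    using eM[of i] by (rule mult_right_mono) simp
  have b5: "(2 * \<eta>) * ((2 * \<eta> * ?s) * ?n) \<le> (2 * \<eta>) * (1 * ?n)"
    using b4 eta by (intro mult_left_mono) auto
  have "qf (Zs i) x = 2 * (((- (2 * \<eta>)) *\<^sub>R ?l) \<bullet> ?l) + qf (Mm K i) ((- (2 * \<eta>)) *\<^sub>R ?l)"
    by (simp only: Z_qf'[OF st] d)
  also have "\<dots> \<le> - 2 * \<eta> * ?n" using e1 e2 b2 b3 b5 by linarith
  also have "\<dots> = qf ((- 2 * \<eta>) *\<^sub>R Ns i) x" by (simp only: qf_scaleR qf_tt)
  finally show ?thesis .
qed

lemma Z_nonpos: "qf (Zs i) x \<le> 0"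
proof -
  have "qf ((- 2 * \<eta>) *\<^sub>R Ns i) x = - 2 * \<eta> * (norm (Lg K i *v x))\<^sup>2" by (simp only: qf_scaleR qf_tt)
  also have "\<dots> \<le> 0" using eta by simp
  finally show ?thesis using Z_bound[of i x] by linarith
qed

lemma Kn_stable: "ms_stable A B p Kn"
proof -
  let ?P = "Pm K" and ?L = "Lop A B p Kn" and ?T = "Top A B p Kn"
  define q where "q = Lambda_min Q"
  define pb where "pb = (\<Sum>j\<in>UNIV. spec_norm (?P j))"
  have q0: "0 < q" using Lambda_Q_pos by (simp add: q_def)
  have Pup: "qf (?P i) x \<le> pb * (norm x)\<^sup>2" for i x
  proof -
    have "spec_norm (?P i) \<le> pb" unfolding pb_def by (rule member_le_sum) (auto simp: spec_norm_nonneg)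
    then show ?thesis using qf_le_spec[of "?P i" x] by (meson mult_right_mono order_trans zero_le_power2)
  qed
  have Plow: "q * (norm x)\<^sup>2 \<le> qf (?P i) x" for i x
    using Q_lower[of x i] Pm_ge_Q[OF st, of i x] by (simp add: q_def)
  have qpb: "q \<le> pb"
    using Plow[where i=undefined and x="axis undefined 1"] Pup[where i=undefined and x="axis undefined 1"]
    by (simp add: norm_axis_1)
  have pb0: "0 < pb" using q0 qpb by simp
  define \<theta> where "\<theta> = 1 - q / pb"
  have th0: "0 \<le> \<theta>" using qpb pb0 by (simp add: \<theta>_def field_simps)
  have th1: "\<theta> < 1" using q0 pb0 by (simp add: \<theta>_def)
  have LP: "qf (?L ?P i) x \<le> qf (\<theta> *\<^sub>R ?P i) x" for i x
  proof -
    have z: "qf (Zs i) x = qf (QK Q R Kn i) x + qf (?L ?P i) x - qf (?P i) x" by (simp add: qf_add qf_diff)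
    have "qf (QK Q R Kn i) x \<ge> q * (norm x)\<^sup>2"
      using Q_lower[of x i] psd_qf[OF pd_psd[OF R_pd[of i]], of "Kn i *v x"] by (simp add: QK_qf q_def)
    moreover have "q * (norm x)\<^sup>2 \<ge> (q / pb) * qf (?P i) x"
    proof -
      have "(q / pb) * qf (?P i) x \<le> (q / pb) * (pb * (norm x)\<^sup>2)"
        using q0 pb0 by (intro mult_left_mono Pup) auto
      then show ?thesis using pb0 by simp
    qed
    moreover have "qf (\<theta> *\<^sub>R ?P i) x = qf (?P i) x - (q / pb) * qf (?P i) x"
      by (simp only: qf_scaleR \<theta>_def) (simp add: algebra_simps)
    moreover have "(q / pb) * qf (?P i) x = q * qf (?P i) x / pb" by simp
    ultimately show ?thesis using z Z_nonpos[of i x] by linarith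
  qed
  have LPn: "qf ((?L ^^ t) ?P i) x \<le> \<theta> ^ t * qf (?P i) x" for t i x
  proof (induction t arbitrary: i x)
    case 0 then show ?case by simp
  next
    case (Suc t)
    have "qf ((?L ^^ Suc t) ?P i) x = qf ((?L ^^ t) (?L ?P) i) x"
      by (simp add: funpow_Suc_right del: funpow.simps)
    also have "\<dots> \<le> qf ((?L ^^ t) (\<lambda>i. \<theta> *\<^sub>R ?P i) i) x"
      by (rule Lopn_mono[OF p_nonneg]) (rule LP)
    also have "\<dots> = \<theta> * qf ((?L ^^ t) ?P i) x" by (simp add: Lopn_scale qf_scaleR)
    also have "\<dots> \<le> \<theta> * (\<theta> ^ t * qf (?P i) x)" using th0 Suc by (intro mult_left_mono) auto
    finally show ?case by (simp add: mult.assoc)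
  qed
  show ?thesis
    unfolding ms_stable_def
  proof (intro allI impI)
    fix V :: "'s \<Rightarrow> real^'d^'d" and j assume V: "\<forall>i. psd_mat (V i)"
    then have Vp: "psdT V" by (simp add: psdT_def)
    have Wp: "psd_mat ((?T ^^ t) V i)" for t i
      using Topn_psd[where p=p and A=A and B=B and K=Kn and n=t, OF p_nonneg Vp] unfolding psdT_def by blast
    have ipb: "ip ?P ((?T ^^ t) V) \<le> \<theta> ^ t * ip ?P V" for t
    proof -
      have "ip ?P ((?T ^^ t) V) = (\<Sum>i\<in>UNIV. trace ((?L ^^ t) ?P i ** V i))"
        by (simp only: ip_Topn) (simp only: ip_def)
      also have "\<dots> \<le> (\<Sum>i\<in>UNIV. trace ((\<theta> ^ t *\<^sub>R ?P i) ** V i))"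
        by (intro sum_mono trace_mono_qf) (use V LPn in \<open>auto simp: qf_scaleR\<close>)
      also have "\<dots> = \<theta> ^ t * ip ?P V" by (simp add: ip_def matrix_scaleR_left trace_scaleR sum_distrib_left)
      finally show ?thesis .
    qed
    have trb: "q * trace ((?T ^^ t) V j) \<le> ip ?P ((?T ^^ t) V)" for t
    proof -
      have each: "q * trace ((?T ^^ t) V i) \<le> trace (?P i ** (?T ^^ t) V i)" for i
        by (rule trace_psd_lower[OF Wp Plow])
      have "q * trace ((?T ^^ t) V j) \<le> (\<Sum>i\<in>UNIV. q * trace ((?T ^^ t) V i))"
        by (rule member_le_sum) (auto intro: mult_nonneg_nonneg[OF less_imp_le[OF q0] trace_psd_ge0[OF Wp]])
      also have "\<dots> \<le> ip ?P ((?T ^^ t) V)" unfolding ip_def by (rule sum_mono) (rule each)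
      finally show ?thesis .
    qed
    have ent: "\<bar>(?T ^^ t) V j $ a $ b\<bar> \<le> \<theta> ^ t * (ip ?P V / q)" for t a b
    proof -
      have "\<bar>(?T ^^ t) V j $ a $ b\<bar> \<le> trace ((?T ^^ t) V j)" by (rule psd_entry_bound[OF Wp])
      also have "\<dots> \<le> ip ?P ((?T ^^ t) V) / q" using trb[of t] q0 by (simp add: field_simps)
      also have "\<dots> \<le> \<theta> ^ t * ip ?P V / q" using ipb[of t] q0 by (simp add: divide_right_mono)
      finally show ?thesis by simp
    qed
    have glim: "(\<lambda>t. \<theta> ^ t * (ip ?P V / q)) \<longlonglongrightarrow> 0"
      using th0 th1 by (intro tendsto_mult_left_zero LIMSEQ_power_zero) simp
    show "(\<lambda>t. (?T ^^ t) V j) \<longlonglongrightarrow> 0"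
    proof (rule vec_tendstoI)
      fix a
      show "(\<lambda>t. (?T ^^ t) V j $ a) \<longlonglongrightarrow> 0 $ a"
      proof (simp, rule vec_tendstoI)
        fix b
        have "\<forall>t. norm ((?T ^^ t) V j $ a $ b) \<le> \<theta> ^ t * (ip ?P V / q)"
          using ent by (simp only: real_norm_def) blast
        then have "(\<lambda>t. (?T ^^ t) V j $ a $ b) \<longlonglongrightarrow> 0"
          by (rule Lim_null_comparison[OF always_eventually glim])
        then show "(\<lambda>t. (?T ^^ t) V j $ a $ b) \<longlonglongrightarrow> 0 $ b" by simp
      qed
    qed
  qed
qed

lemma Kn_descent: "C Kn - C K \<le> - 2 * \<eta> * \<mu> * Gn K"
proof -
  let ?X = "Xmat A B p \<pi> \<Sigma> Kn"
  have st': "ms_stable A B p Kn" by (rule Kn_stable)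
  have Xp: "psd_mat (?X i)" for i using X_psd[OF st'] by (simp add: psdT_def)
  have "C Kn - C K = (\<Sum>i\<in>UNIV. trace (Zs i ** ?X i))"
    by (simp only: cost_diff[OF st st'] ip_def)
  also have "\<dots> \<le> (\<Sum>i\<in>UNIV. trace (((- 2 * \<eta>) *\<^sub>R Ns i) ** ?X i))"
    by (intro sum_mono trace_mono_qf[OF Xp] Z_bound)
  also have "\<dots> = (\<Sum>i\<in>UNIV. (- 2 * \<eta>) * trace (?X i ** Ns i))"
    by (simp only: matrix_scaleR_left trace_scaleR trace_mul_sym[of "Ns _"])
  also have "\<dots> \<le> (\<Sum>i\<in>UNIV. (- 2 * \<eta>) * (\<mu> * trace (Ns i)))"
  proof (rule sum_mono)
    fix i
    have "\<mu> * trace (Ns i) \<le> trace (?X i ** Ns i)"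
      by (rule trace_psd_lower[OF psd_ttt X_qf[OF st']])
    then show "(- 2 * \<eta>) * trace (?X i ** Ns i) \<le> (- 2 * \<eta>) * (\<mu> * trace (Ns i))"
      using eta by (intro mult_left_mono_neg) auto
  qed
  also have "\<dots> = - 2 * \<eta> * \<mu> * Gn K" by (simp add: Gn_def sum_distrib_left mult_ac)
  finally show ?thesis .
qed

end

end


theorem theorem3:
  fixes A :: "'s::finite \<Rightarrow> real^'d::finite^'d"
    and B :: "'s \<Rightarrow> real^'k::finite^'d"
    and p :: "'s \<Rightarrow> 's \<Rightarrow> real"
    and \<pi> :: "'s \<Rightarrow> real"
    and \<Sigma> :: "real^'d^'d"
    and Q :: "'s \<Rightarrow> real^'d^'d"
    and R :: "'s \<Rightarrow> real^'k^'k"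
    and K0 Kopt :: "'s \<Rightarrow> real^'d^'k"
    and \<eta> :: real
  assumes p_nonneg: "\<And>i j. 0 \<le> p i j"
    and p_stoch: "\<And>i. (\<Sum>j\<in>UNIV. p i j) = 1"
    and pi_pos: "\<And>i. 0 < \<pi> i"
    and pi_sum: "(\<Sum>i\<in>UNIV. \<pi> i) = 1"
    and Sigma_pd: "pd_mat \<Sigma>"
    and Q_pd: "\<And>i. pd_mat (Q i)"
    and R_pd: "\<And>i. pd_mat (R i)"
    and stabilizable: "\<exists>K. K \<in> Kset A B p"
    and K0_stab: "K0 \<in> Kset A B p"
    and Kopt_stab: "Kopt \<in> Kset A B p"
    and Kopt_opt: "\<And>K. K \<in> Kset A B p \<Longrightarrow> cost A B p \<pi> \<Sigma> Q R Kopt \<le> cost A B p \<pi> \<Sigma> Q R K"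
    and eta_pos: "0 < \<eta>"
    and eta_le: "\<eta> \<le> 1/2 * inverse (max_norm R
                   + (max_norm B)\<^sup>2 * cost A B p \<pi> \<Sigma> Q R K0 / mu \<pi> \<Sigma>)"
  shows "\<forall>n. npg_iter A B p Q R \<eta> K0 n \<in> Kset A B p \<and>
           cost A B p \<pi> \<Sigma> Q R (npg_iter A B p Q R \<eta> K0 n) - cost A B p \<pi> \<Sigma> Q R Kopt
             \<le> (1 - 2 * mu \<pi> \<Sigma> * Lambda_min R / max_norm (Xmat A B p \<pi> \<Sigma> Kopt) * \<eta>) ^ n
                * (cost A B p \<pi> \<Sigma> Q R K0 - cost A B p \<pi> \<Sigma> Q R Kopt)"
proof -
  interpret N: npg A B p \<pi> \<Sigma> Q R
    by unfold_locales (use p_nonneg p_stoch pi_pos Sigma_pd Q_pd R_pd in auto)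
  let ?C = "cost A B p \<pi> \<Sigma> Q R"
  let ?K = "npg_iter A B p Q R \<eta> K0"
  let ?mu = "mu \<pi> \<Sigma>"
  let ?La = "Lambda_min R"
  let ?Xs = "max_norm (Xmat A B p \<pi> \<Sigma> Kopt)"
  let ?rho = "1 - 2 * ?mu * ?La / ?Xs * \<eta>"
  let ?e0 = "?C K0 - ?C Kopt"
  define D where "D = max_norm R + (max_norm B)\<^sup>2 * ?C K0 / ?mu"
  have st0: "ms_stable A B p K0" using K0_stab by (simp add: Kset_def)
  have sts: "ms_stable A B p Kopt" using Kopt_stab by (simp add: Kset_def)
  have mu0: "0 < ?mu" by (rule N.mu_pos)
  have La0: "0 < ?La" by (rule N.Lambda_R_pos)
  have LaR: "?La \<le> max_norm R" by (rule N.Lambda_R_le_max)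
  have muX: "?mu \<le> ?Xs" by (rule N.mu_le_maxX[OF sts])
  have Xs0: "0 < ?Xs" using mu0 muX by simp
  have C0: "0 \<le> ?C K0" by (rule N.cost_nonneg[OF st0])
  have e0: "0 \<le> ?e0" using Kopt_opt[OF K0_stab] by simp
  have D_ge: "max_norm R \<le> D" using C0 mu0 by (simp add: D_def)
  have D0: "0 < D" using La0 LaR D_ge by simp
  have etaD: "2 * \<eta> * D \<le> 1"
  proof -
    have "\<eta> \<le> 1 / (2 * D)" using eta_le by (simp add: D_def field_simps)
    then show ?thesis using D0 by (simp add: field_simps)
  qed
  have rho0: "0 \<le> ?rho"
  proof -
    have "2 * ?mu * ?La / ?Xs * \<eta> = (?mu / ?Xs) * (?La * (2 * \<eta>))" by (simp add: field_simps)
    also have "\<dots> \<le> 1 * 1"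
    proof (intro mult_mono)
      show "?mu / ?Xs \<le> 1" using muX Xs0 by simp
      have "?La * (2 * \<eta>) \<le> D * (2 * \<eta>)" using LaR D_ge eta_pos by (intro mult_right_mono) auto
      also have "\<dots> \<le> 1" using etaD by (simp add: mult.commute)
      finally show "?La * (2 * \<eta>) \<le> 1" .
    qed (use mu0 Xs0 La0 eta_pos in auto)
    finally show ?thesis by simp
  qed
  have rho1: "?rho \<le> 1" using mu0 La0 Xs0 eta_pos by simp
  have main: "ms_stable A B p (?K n) \<and> ?C (?K n) - ?C Kopt \<le> ?rho ^ n * ?e0" for n
  proof (induction n)
    case 0 then show ?case using st0 by simp
  next
    case (Suc n)
    have stn: "ms_stable A B p (?K n)" using Suc by blast
    have bn: "?C (?K n) - ?C Kopt \<le> ?rho ^ n * ?e0" using Suc by blast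
    have "?rho ^ n * ?e0 \<le> 1 * ?e0" using rho0 rho1 e0 by (intro mult_right_mono power_le_one) auto
    then have CnC0: "?C (?K n) \<le> ?C K0" using bn by simp
    have eM: "2 * \<eta> * spec_norm (N.Mm (?K n) i) \<le> 1" for i
    proof -
      have "spec_norm (N.Mm (?K n) i) \<le> max_norm R + (max_norm B)\<^sup>2 * (?C (?K n) / ?mu)"
        by (rule N.spec_M_le[OF stn])
      also have "\<dots> \<le> D"
      proof -
        have a: "?C (?K n) / ?mu \<le> ?C K0 / ?mu" using CnC0 mu0 by (simp add: divide_right_mono)
        have "(max_norm B)\<^sup>2 * (?C (?K n) / ?mu) \<le> (max_norm B)\<^sup>2 * (?C K0 / ?mu)"
          using a by (rule mult_left_mono) simp
        then show ?thesis unfolding D_def by simp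
      qed
      finally have "2 * \<eta> * spec_norm (N.Mm (?K n) i) \<le> 2 * \<eta> * D" using eta_pos by simp
      then show ?thesis using etaD by simp
    qed
    have Ksuc: "?K (Suc n) = N.Kn (?K n) \<eta>" by (simp add: N.Kn_def[OF stn eta_pos eM])
    have st': "ms_stable A B p (?K (Suc n))"
      unfolding Ksuc by (rule N.Kn_stable[OF stn eta_pos eM])
    have desc: "?C (?K (Suc n)) - ?C (?K n) \<le> - 2 * \<eta> * ?mu * N.Gn (?K n)"
      unfolding Ksuc by (rule N.Kn_descent[OF stn eta_pos eM])
    have gd: "?C (?K n) - ?C Kopt \<le> ?Xs / ?La * N.Gn (?K n)"
      by (rule N.grad_dom[OF stn sts])
    then have "?La / ?Xs * (?C (?K n) - ?C Kopt) \<le> N.Gn (?K n)"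
      using La0 Xs0 by (simp add: field_simps)
    then have "2 * \<eta> * ?mu * (?La / ?Xs * (?C (?K n) - ?C Kopt)) \<le> 2 * \<eta> * ?mu * N.Gn (?K n)"
      using eta_pos mu0 by (intro mult_left_mono) auto
    with desc have "?C (?K (Suc n)) - ?C Kopt \<le> ?rho * (?C (?K n) - ?C Kopt)"
      by (simp add: algebra_simps)
    also have "\<dots> \<le> ?rho * (?rho ^ n * ?e0)" using bn rho0 by (rule mult_left_mono)
    finally show ?case using st' by simp
  qed
  show ?thesis using main by (simp add: Kset_def)
qed


end
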